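(* Let $\{\mathcal{A}_i\}_{i\in[M]}$ be finite index sets, $v_{i,a}\in\mathbb{R}^n$ for $i\in[M]$, $a\in\mathcal{A}_i$, and $f_i>0$ for $i\in[M]$. Let $\bar{\mathcal{C}}$ be the set of $\pi=(\pi_{i,a})$ with $\pi_{i,a}\ge0$, $\sum_{a\in\mathcal{A}_i}\pi_{i,a}=f_i$ for all $i\in[M]$, and $\mathrm{rank}(\{\pi_{i,a}v_{i,a}\}_{i\in[M],a\in\mathcal{A}_i})=\mathrm{rank}(\{v_{i,a}\}_{i\in[M],a\in\mathcal{A}_i})=:D$. Define $\bar F(\pi)=\log\mathrm{Det}\big(\sum_{j\in[M]}\sum_{a\in\mathcal{A}_j}\pi_{j,a}v_{j,a}v_{j,a}^\intercal\big)$ and $\bar G(\pi)=\sum_{i=1}^Mf_i\max_{a\in\mathcal{A}_i}v_{i,a}^\intercal\big(\sum_{j\in[M]}\sum_{b\in\mathcal{A}_j}\pi_{j,b}v_{j,b}v_{j,b}^\intercal\big)^\dagger v_{i,a}$. Then for $\pi^*\in\bar{\mathcal{C}}$ the following are equivalent: (1) $\pi^*$ maximizes $\bar F$ over $\bar{\mathcal{C}}$; (2) $\pi^*$ minimizes $\bar G$ over $\bar{\mathcal{C}}$; (3) $\bar G(\pi^* )=D$.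
   Context: $A^\dagger$ denotes the Moore–Penrose pseudo-inverse. For $A\in\mathbb{R}^{n\times n}$, the pseudo-determinant is $\mathrm{Det}(A)=\lim_{\epsilon\to0}\det(A+\epsilon I)/\epsilon^{n-\mathrm{rank}(A)}$. *)

theory Defs
  imports "HOL-Analysis.Analysis"
begin

definition pinv :: "real^'n^'n \<Rightarrow> real^'n^'n" where
  "pinv A = (THE X. A ** X ** A = A \<and> X ** A ** X = X \<and>
                    transpose (A ** X) = A ** X \<and> transpose (X ** A) = X ** A)"

definition pdet :: "real^'n^'n \<Rightarrow> real" where
  "pdet A = Lim (at 0) (\<lambda>\<epsilon>::real. det (A + \<epsilon> *\<^sub>R mat 1) / \<epsilon> ^ (CARD('n) - rank A))"

definition outer :: "real^'n \<Rightarrow> real^'n^'n" where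
  "outer v = (\<chi> i j. v $ i * v $ j)"

definition design :: "nat \<Rightarrow> (nat \<Rightarrow> 'a set) \<Rightarrow> (nat \<Rightarrow> 'a \<Rightarrow> real^'n)
    \<Rightarrow> (nat \<Rightarrow> 'a \<Rightarrow> real) \<Rightarrow> real^'n^'n" where
  "design M A v \<pi> = (\<Sum>j\<in>{1..M}. \<Sum>a\<in>A j. \<pi> j a *\<^sub>R outer (v j a))"

definition famrank :: "nat \<Rightarrow> (nat \<Rightarrow> 'a set) \<Rightarrow> (nat \<Rightarrow> 'a \<Rightarrow> real^'n) \<Rightarrow> nat" where
  "famrank M A v = dim {v i a | i a. i \<in> {1..M} \<and> a \<in> A i}"

definition Cbar :: "nat \<Rightarrow> (nat \<Rightarrow> 'a set) \<Rightarrow> (nat \<Rightarrow> 'a \<Rightarrow> real^'n) \<Rightarrow> (nat \<Rightarrow> real)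
    \<Rightarrow> (nat \<Rightarrow> 'a \<Rightarrow> real) set" where
  "Cbar M A v f = {\<pi>. (\<forall>i\<in>{1..M}. \<forall>a\<in>A i. \<pi> i a \<ge> 0)
      \<and> (\<forall>i\<in>{1..M}. (\<Sum>a\<in>A i. \<pi> i a) = f i)
      \<and> famrank M A (\<lambda>i a. \<pi> i a *\<^sub>R v i a) = famrank M A v}"

definition Fbar :: "nat \<Rightarrow> (nat \<Rightarrow> 'a set) \<Rightarrow> (nat \<Rightarrow> 'a \<Rightarrow> real^'n)
    \<Rightarrow> (nat \<Rightarrow> 'a \<Rightarrow> real) \<Rightarrow> real" where
  "Fbar M A v \<pi> = ln (pdet (design M A v \<pi>))"

definition Gbar :: "nat \<Rightarrow> (nat \<Rightarrow> 'a set) \<Rightarrow> (nat \<Rightarrow> 'a \<Rightarrow> real^'n) \<Rightarrow> (nat \<Rightarrow> real)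
    \<Rightarrow> (nat \<Rightarrow> 'a \<Rightarrow> real) \<Rightarrow> real" where
  "Gbar M A v f \<pi> = (\<Sum>i\<in>{1..M}. f i *
      Max ((\<lambda>a. v i a \<bullet> (pinv (design M A v \<pi>) *v v i a)) ` A i))"

end

theory Submission
  imports Defs
begin

lemma if_mult0: "(if P then a else 0) * b = (if P then a * b else (0::real))"
  and if_mult0': "b * (if P then a else 0) = (if P then b * a else (0::real))"
  and if_scaleR0: "(if P then a else 0) *\<^sub>R (v::'a::real_vector) = (if P then a *\<^sub>R v else 0)"
  by auto

definition diagm :: "('n::finite \<Rightarrow> real) \<Rightarrow> real^'n^'n" where
  "diagm d = (\<chi> i j. if i = j then d i else 0)"

lemma symm_dot:
  fixes A :: "real^'n^'n"
  assumes "transpose A = A"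
  shows "x \<bullet> (A *v y) = (A *v x) \<bullet> y"
proof -
  have "x \<bullet> (A *v y) = (x v* A) \<bullet> y" by (simp add: dot_lmul_matrix)
  also have "x v* A = transpose A *v x" by (simp add: vector_transpose_matrix)
  finally show ?thesis using assms by simp
qed

lemma spectral_sub:
  fixes A :: "real^'n^'n"
  assumes sym: "transpose A = A"
  shows "subspace W \<Longrightarrow> (\<forall>x\<in>W. A *v x \<in> W) \<Longrightarrow>
    \<exists>B. B \<subseteq> W \<and> W \<subseteq> span B \<and> (\<forall>u\<in>B. norm u = 1 \<and> (\<exists>l. A *v u = l *\<^sub>R u))
      \<and> pairwise orthogonal B"
proof (induction "dim W" arbitrary: W rule: less_induct)
  case less
  show ?case
  proof (cases "W \<subseteq> {0}")
    case True
    then show ?thesis by (intro exI[of _ "{}"]) auto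
  next
    case False
    then obtain w where w: "w \<in> W" "w \<noteq> 0" by auto
    define K where "K = W \<inter> sphere 0 1"
    define q where "q x = x \<bullet> (A *v x)" for x
    have "closed W" using less.prems(1) by (simp add: closed_subspace)
    hence "compact K" unfolding K_def by (simp add: closed_Int_compact)
    have "w /\<^sub>R norm w \<in> K" unfolding K_def using w less.prems(1)
      by (auto simp: subspace_scale)
    hence "K \<noteq> {}" by auto
    have "continuous_on K q" unfolding q_def
      by (intro continuous_intros linear_continuous_on matrix_vector_mul_linear)
    then obtain u where u: "u \<in> K" and umax: "\<And>y. y \<in> K \<Longrightarrow> q y \<le> q u"
      using continuous_attains_sup[OF \<open>compact K\<close> \<open>K \<noteq> {}\<close>] by blast
    have uW: "u \<in> W" and un: "norm u = 1" using u by (auto simp: K_def)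
    have uu: "u \<bullet> u = 1" using un by (simp add: norm_eq_1)
    have qscale: "q (c *\<^sub>R x) = c^2 * q x" for c x
      by (simp add: q_def matrix_vector_mult_scaleR power2_eq_square)
    have qle: "q x \<le> q u * (x \<bullet> x)" if "x \<in> W" for x
    proof (cases "x = 0")
      case True then show ?thesis by (simp add: q_def)
    next
      case False
      have "x /\<^sub>R norm x \<in> K" unfolding K_def using that False less.prems(1)
        by (auto simp: subspace_scale)
      hence "q (x /\<^sub>R norm x) \<le> q u" by (rule umax)
      hence "(inverse (norm x))^2 * q x \<le> q u" by (simp add: qscale)
      hence "q x \<le> q u * (norm x)^2" using False
        by (simp add: field_simps power2_eq_square)
      thus ?thesis by (simp add: power2_norm_eq_inner)
    qed
    have claim: "z \<bullet> (A *v u) = 0" if zW: "z \<in> W" and zu: "z \<bullet> u = 0" for z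
    proof -
      define c where "c = z \<bullet> (A *v u)"
      define d where "d = q z - q u * (z \<bullet> z)"
      have key: "2 * t * c + t^2 * d \<le> 0" for t
      proof -
        have xW: "u + t *\<^sub>R z \<in> W" using uW zW less.prems(1)
          by (simp add: subspace_add subspace_scale)
        have e1: "q (u + t *\<^sub>R z) = q u + 2 * t * c + t^2 * q z"
        proof -
          have "u \<bullet> (A *v z) = c" unfolding c_def using symm_dot[OF sym, of u z]
            by (simp add: inner_commute)
          thus ?thesis unfolding q_def c_def
            by (simp add: matrix_vector_right_distrib matrix_vector_mult_scaleR
                inner_add_left inner_add_right power2_eq_square algebra_simps)
        qed
        have e2: "(u + t *\<^sub>R z) \<bullet> (u + t *\<^sub>R z) = 1 + t^2 * (z \<bullet> z)"
          using uu zu by (simp add: inner_add_left inner_add_right inner_commute power2_eq_square)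
        show ?thesis using qle[OF xW] unfolding e1 e2 d_def by (simp add: algebra_simps)
      qed
      have "c = 0"
      proof -
        define e where "e = \<bar>d\<bar> + 1"
        have pos: "e > 0" by (simp add: e_def)
        have pos2: "2 * e + d > 0" unfolding e_def by (cases "d \<ge> 0") auto
        define t where "t = c / e"
        have k: "2 * t * c + t^2 * d \<le> 0" by (rule key)
        have eq: "e^2 * (2 * t * c + t^2 * d) = c^2 * (2 * e + d)"
          unfolding t_def using pos by (simp add: field_simps power2_eq_square)
        have "e^2 * (2 * t * c + t^2 * d) \<le> 0"
          using k pos by (simp add: mult_nonneg_nonpos)
        hence "c^2 * (2 * e + d) \<le> 0" using eq by simp
        hence "c^2 \<le> 0" using pos2 by (simp add: mult_le_0_iff)
        thus ?thesis by simp
      qed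
      thus ?thesis by (simp add: c_def)
    qed
    define l where "l = q u"
    have eig: "A *v u = l *\<^sub>R u"
    proof -
      define z where "z = A *v u - l *\<^sub>R u"
      have zW: "z \<in> W" unfolding z_def using less.prems uW
        by (simp add: subspace_diff subspace_scale)
      have zu: "z \<bullet> u = 0" unfolding z_def l_def q_def using uu
        by (simp add: inner_diff_left inner_diff_right inner_commute)
      have "z \<bullet> z = z \<bullet> (A *v u) - l * (z \<bullet> u)" unfolding z_def
        by (simp add: inner_diff_right)
      also have "\<dots> = 0" using claim[OF zW zu] zu by simp
      finally have "z = 0" by simp
      thus ?thesis unfolding z_def by simp
    qed
    define W' where "W' = {x \<in> W. x \<bullet> u = 0}"
    have subW': "subspace W'" unfolding W'_def subspace_def using less.prems(1)
      by (auto simp: subspace_def inner_add_left)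
    have invW': "\<forall>x\<in>W'. A *v x \<in> W'"
    proof
      fix x assume "x \<in> W'"
      hence xW: "x \<in> W" and xu: "x \<bullet> u = 0" by (auto simp: W'_def)
      have "(A *v x) \<bullet> u = x \<bullet> (A *v u)" using symm_dot[OF sym, of x u] by simp
      also have "\<dots> = 0" using xu eig by simp
      finally show "A *v x \<in> W'" using less.prems(2) xW by (auto simp: W'_def)
    qed
    have "dim W' < dim W"
    proof (rule dim_psubset)
      have "W' \<subset> W" using uW uu unfolding W'_def by (metis (mono_tags, lifting) mem_Collect_eq one_neq_zero psubsetI subsetI)
      moreover have "span W' = W'" using subW' by (rule span_eq_iff[THEN iffD2])
      moreover have "span W = W" using less.prems(1) by (rule span_eq_iff[THEN iffD2])
      ultimately show "span W' \<subset> span W" by (simp only:)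
    qed
    from less.hyps[OF this subW' invW'] obtain B' where
      B': "B' \<subseteq> W'" "W' \<subseteq> span B'" "\<forall>u\<in>B'. norm u = 1 \<and> (\<exists>l. A *v u = l *\<^sub>R u)"
          "pairwise orthogonal B'" by blast
    show ?thesis
    proof (intro exI[of _ "insert u B'"] conjI)
      show "insert u B' \<subseteq> W" using B'(1) uW by (auto simp: W'_def)
      show "W \<subseteq> span (insert u B')"
      proof
        fix x assume xW: "x \<in> W"
        have "x - (x \<bullet> u) *\<^sub>R u \<in> W'" unfolding W'_def using xW uW uu less.prems(1)
          by (simp add: subspace_diff subspace_scale inner_diff_left)
        hence "x - (x \<bullet> u) *\<^sub>R u \<in> span (insert u B')"
          using B'(2) span_mono[of B' "insert u B'"] by auto
        moreover have "(x \<bullet> u) *\<^sub>R u \<in> span (insert u B')"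
          by (simp add: span_base span_scale)
        ultimately have "(x - (x \<bullet> u) *\<^sub>R u) + (x \<bullet> u) *\<^sub>R u \<in> span (insert u B')"
          by (rule span_add)
        thus "x \<in> span (insert u B')" by simp
      qed
      show "\<forall>y\<in>insert u B'. norm y = 1 \<and> (\<exists>l. A *v y = l *\<^sub>R y)"
        using B'(3) un eig by auto
      show "pairwise orthogonal (insert u B')"
        using B'(1,4) unfolding pairwise_insert
        by (auto simp: W'_def orthogonal_def inner_commute)
    qed
  qed
qed


declare transpose_matrix_vector[simp del]

lemma transpose_dot: "(transpose M *v x) \<bullet> y = x \<bullet> (M *v y)" for M :: "real^'n^'m"
  by (simp only: transpose_matrix_vector dot_lmul_matrix)

lemma spectral:
  fixes A :: "real^'n^'n"
  assumes sym: "transpose A = A"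
  obtains P :: "real^'n^'n" and d where "orthogonal_matrix P" "A = P ** diagm d ** transpose P"
proof -
  obtain B where B: "UNIV \<subseteq> span B" "\<forall>u\<in>B. norm u = 1 \<and> (\<exists>l. A *v u = l *\<^sub>R u)"
      "pairwise orthogonal B"
    using spectral_sub[OF sym subspace_UNIV] by blast
  have "0 \<notin> B" using B(2) by force
  hence ind: "independent B" using B(3) by (simp add: pairwise_orthogonal_independent)
  hence finB: "finite B" using independent_imp_finite by blast
  have "card B = dim (UNIV :: (real^'n) set)"
    using basis_card_eq_dim[of B UNIV] B(1) ind by auto
  hence cardB: "card B = CARD('n)" by (simp add: dim_UNIV DIM_cart)
  obtain g where g: "bij_betw g (UNIV::'n set) B"
    using bij_betw_iff_card[of "UNIV::'n set" B] finB cardB by auto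
  have gB: "g k \<in> B" for k using g by (auto simp: bij_betw_def)
  have ginj: "g k = g l \<Longrightarrow> k = l" for k l using g by (auto simp: bij_betw_def inj_on_def)
  define P :: "real^'n^'n" where "P = (\<chi> i k. g k $ i)"
  define d where "d k = (SOME l. A *v g k = l *\<^sub>R g k)" for k
  have eig: "A *v g k = d k *\<^sub>R g k" for k
    unfolding d_def using B(2) gB[of k] by (metis (mono_tags, lifting) someI_ex)
  have gdot: "g k \<bullet> g l = (if k = l then 1 else 0)" for k l
  proof (cases "k = l")
    case True
    then show ?thesis using B(2) gB[of k] by (simp add: norm_eq_1)
  next
    case False
    hence "g k \<noteq> g l" using ginj by blast
    then show ?thesis using B(3) gB False unfolding pairwise_def orthogonal_def by auto
  qed
  have PtP: "transpose P ** P = mat 1"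
  proof -
    have "(transpose P ** P) $ k $ l = g k \<bullet> g l" for k l
      by (simp add: P_def matrix_matrix_mult_def transpose_def inner_vec_def)
    thus ?thesis using gdot by (simp add: vec_eq_iff mat_def)
  qed
  hence PPt: "P ** transpose P = mat 1" by (simp add: matrix_left_right_inverse)
  have AP: "A ** P = P ** diagm d"
  proof -
    have "(A ** P) $ i $ k = (A *v g k) $ i" for i k
      by (simp add: P_def matrix_matrix_mult_def matrix_vector_mult_def)
    moreover have "(P ** diagm d) $ i $ k = d k * g k $ i" for i k
    proof -
      have "(P ** diagm d) $ i $ k = (\<Sum>j\<in>UNIV. P $ i $ j * (if j = k then d j else 0))"
        by (simp add: matrix_matrix_mult_def diagm_def)
      also have "\<dots> = P $ i $ k * d k"
        by (simp add: if_mult0')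
      finally show ?thesis by (simp add: P_def)
    qed
    ultimately show ?thesis using eig by (simp add: vec_eq_iff)
  qed
  have "A = A ** (P ** transpose P)" using PPt by simp
  also have "\<dots> = (A ** P) ** transpose P"
    by (rule matrix_mul_assoc)
  also have "\<dots> = P ** diagm d ** transpose P" by (simp add: AP)
  finally show ?thesis using that[of P d] PtP PPt by (simp add: orthogonal_matrix_def)
qed

lemma tP_nth: "(transpose P *v x) $ k = column k P \<bullet> x" for P :: "real^'n^'n"
  by (simp add: matrix_vector_mult_def transpose_def column_def inner_vec_def)

lemma col_dot:
  fixes P :: "real^'n^'n"
  assumes "orthogonal_matrix P"
  shows "column k P \<bullet> column l P = (if k = l then 1 else 0)"
proof -
  have "(transpose P ** P) $ k $ l = column k P \<bullet> column l P"
    by (simp add: matrix_matrix_mult_def transpose_def column_def inner_vec_def)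
  thus ?thesis using assms by (simp add: orthogonal_matrix_def mat_def)
qed

lemma parseval:
  fixes P :: "real^'n^'n"
  assumes "orthogonal_matrix P"
  shows "(\<Sum>k\<in>UNIV. (column k P \<bullet> x)^2) = x \<bullet> x"
proof -
  have "(\<Sum>k\<in>UNIV. (column k P \<bullet> x)^2) = (transpose P *v x) \<bullet> (transpose P *v x)"
    by (simp add: inner_vec_def tP_nth power2_eq_square)
  also have "\<dots> = x \<bullet> (P *v (transpose P *v x))" by (rule transpose_dot)
  also have "\<dots> = x \<bullet> x" using assms
    by (simp add: matrix_vector_mul_assoc orthogonal_matrix_def)
  finally show ?thesis .
qed

lemma diagm_mulv: "diagm m *v w = (\<chi> k. m k * w $ k)"
  by (simp add: diagm_def matrix_vector_mult_def vec_eq_iff if_mult0 if_mult0')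

lemma sp_mulv:
  fixes P :: "real^'n^'n"
  shows "(P ** diagm m ** transpose P) *v y = (\<Sum>k\<in>UNIV. (m k * (column k P \<bullet> y)) *\<^sub>R column k P)"
proof -
  have "(P ** diagm m ** transpose P) *v y = P *v (diagm m *v (transpose P *v y))"
    by (simp only: matrix_vector_mul_assoc matrix_mul_assoc)
  also have "\<dots> = (\<Sum>k\<in>UNIV. (m k * (column k P \<bullet> y)) *\<^sub>R column k P)"
    by (simp add: matrix_mult_sum[of P] diagm_mulv tP_nth scalar_mult_eq_scaleR)
  finally show ?thesis .
qed

lemma sp_quad:
  fixes P :: "real^'n^'n"
  shows "x \<bullet> ((P ** diagm m ** transpose P) *v y) = (\<Sum>k\<in>UNIV. m k * (column k P \<bullet> x) * (column k P \<bullet> y))"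
  by (simp add: sp_mulv inner_sum_right inner_commute algebra_simps)

lemma sp_eig:
  fixes P :: "real^'n^'n"
  assumes "orthogonal_matrix P"
  shows "(P ** diagm m ** transpose P) *v column k P = m k *\<^sub>R column k P"
proof -
  have "(P ** diagm m ** transpose P) *v column k P
      = (\<Sum>j\<in>UNIV. (m j * (if j = k then 1 else 0)) *\<^sub>R column j P)"
    by (simp add: sp_mulv col_dot[OF assms])
  also have "\<dots> = m k *\<^sub>R column k P" by (simp add: if_mult0' if_scaleR0)
  finally show ?thesis .
qed

lemma sp_eq:
  fixes P :: "real^'n^'n"
  assumes "orthogonal_matrix P" "\<And>k. a k = b k"
  shows "P ** diagm a ** transpose P = P ** diagm b ** transpose P"
  using assms(2) by (metis ext)

lemma sp_expand:
  fixes P :: "real^'n^'n"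
  assumes "orthogonal_matrix P"
  shows "y = (\<Sum>k\<in>UNIV. (column k P \<bullet> y) *\<^sub>R column k P)"
proof -
  have "diagm (\<lambda>_. 1) = (mat 1 :: real^'n^'n)" by (simp add: diagm_def mat_def)
  hence "P ** diagm (\<lambda>_. 1) ** transpose P = mat 1" using assms
    by (simp add: orthogonal_matrix_def)
  hence "y = (P ** diagm (\<lambda>_. 1) ** transpose P) *v y" by simp
  thus ?thesis by (simp add: sp_mulv)
qed

lemma sp_mat1:
  fixes P :: "real^'n^'n"
  assumes "orthogonal_matrix P"
  shows "mat 1 = P ** diagm (\<lambda>_. 1) ** transpose P"
proof -
  have "diagm (\<lambda>_. 1) = (mat 1 :: real^'n^'n)" by (simp add: diagm_def mat_def)
  thus ?thesis using assms by (simp add: orthogonal_matrix_def)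
qed

lemma sp_add:
  fixes P :: "real^'n^'n"
  shows "P ** diagm a ** transpose P + P ** diagm b ** transpose P = P ** diagm (\<lambda>k. a k + b k) ** transpose P"
  unfolding matrix_eq by (simp add: matrix_vector_mult_add_rdistrib sp_mulv sum.distrib[symmetric] scaleR_add_left algebra_simps)

lemma sp_scale:
  fixes P :: "real^'n^'n"
  shows "c *\<^sub>R (P ** diagm a ** transpose P) = P ** diagm (\<lambda>k. c * a k) ** transpose P"
  unfolding matrix_eq by (simp add: scaleR_matrix_vector_assoc[symmetric] sp_mulv scaleR_sum_right mult.assoc)

lemma sp_add_eps:
  fixes P :: "real^'n^'n"
  assumes "orthogonal_matrix P"
  shows "P ** diagm a ** transpose P + c *\<^sub>R mat 1 = P ** diagm (\<lambda>k. a k + c) ** transpose P"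
  by (simp add: sp_mat1[OF assms] sp_scale sp_add)

lemma sp_mul:
  fixes P :: "real^'n^'n"
  assumes "orthogonal_matrix P"
  shows "(P ** diagm a ** transpose P) ** (P ** diagm b ** transpose P) = P ** diagm (\<lambda>k. a k * b k) ** transpose P"
proof -
  have dd: "diagm a ** diagm b = diagm (\<lambda>k. a k * b k)"
    by (simp add: diagm_def matrix_matrix_mult_def vec_eq_iff if_mult0 if_mult0')
  have "(P ** diagm a ** transpose P) ** (P ** diagm b ** transpose P)
      = P ** diagm a ** (transpose P ** P) ** diagm b ** transpose P"
    by (simp add: matrix_mul_assoc)
  also have "\<dots> = P ** (diagm a ** diagm b) ** transpose P"
    using assms by (simp add: orthogonal_matrix_def matrix_mul_assoc)
  finally show ?thesis by (simp add: dd)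
qed

lemma sp_transpose:
  fixes P :: "real^'n^'n"
  shows "transpose (P ** diagm a ** transpose P) = P ** diagm a ** transpose P"
proof -
  have "transpose (diagm a) = diagm a" by (simp add: diagm_def transpose_def vec_eq_iff)
  thus ?thesis by (simp add: matrix_transpose_mul matrix_mul_assoc)
qed

lemma sp_det:
  fixes P :: "real^'n^'n"
  assumes "orthogonal_matrix P"
  shows "det (P ** diagm a ** transpose P) = (\<Prod>k\<in>UNIV. a k)"
proof -
  have "det P * det (transpose P) = 1"
    using assms by (metis det_I det_mul orthogonal_matrix_def)
  moreover have "det (diagm a) = (\<Prod>k\<in>UNIV. a k)"
    by (subst det_diagonal) (auto simp: diagm_def)
  ultimately show ?thesis by (simp add: det_mul)
qed

lemma sp_range:
  fixes P :: "real^'n^'n"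
  assumes P: "orthogonal_matrix P"
  shows "range ((*v) (P ** diagm m ** transpose P)) = span ((\<lambda>k. column k P) ` {k. m k \<noteq> 0})"
    (is "range ((*v) ?M) = span ?C")
proof
  show "range ((*v) ?M) \<subseteq> span ?C"
  proof clarify
    fix y
    show "?M *v y \<in> span ?C"
      unfolding sp_mulv
    proof (rule span_sum)
      fix k
      show "(m k * (column k P \<bullet> y)) *\<^sub>R column k P \<in> span ?C"
        by (cases "m k = 0") (auto intro: span_scale span_base span_zero)
    qed
  qed
  show "span ?C \<subseteq> range ((*v) ?M)"
  proof (rule span_minimal)
    show "subspace (range ((*v) ?M))"
      by (rule linear_subspace_image[OF matrix_vector_mul_linear subspace_UNIV])
    show "?C \<subseteq> range ((*v) ?M)"
    proof clarify
      fix k assume "m k \<noteq> 0"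
      hence "column k P = ?M *v ((1 / m k) *\<^sub>R column k P)"
        by (simp add: matrix_scaleR_vector_ac sp_eig[OF P] scaleR_matrix_vector_assoc[symmetric])
      thus "column k P \<in> range ((*v) ?M)" by (metis rangeI)
    qed
  qed
qed

lemma col_inj:
  fixes P :: "real^'n^'n"
  assumes P: "orthogonal_matrix P"
  shows "inj (\<lambda>k. column k P)"
proof (rule injI)
  fix k l assume "column k P = column l P"
  hence "column k P \<bullet> column l P = column k P \<bullet> column k P" by simp
  thus "k = l" using col_dot[OF P, of k l] col_dot[OF P, of k k] by (auto split: if_splits)
qed

lemma col_indep:
  fixes P :: "real^'n^'n"
  assumes P: "orthogonal_matrix P"
  shows "independent ((\<lambda>k. column k P) ` S)"
proof (rule pairwise_orthogonal_independent)
  show "pairwise orthogonal ((\<lambda>k. column k P) ` S)"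
    unfolding pairwise_def orthogonal_def using col_dot[OF P] by auto
  show "0 \<notin> (\<lambda>k. column k P) ` S"
  proof
    assume "0 \<in> (\<lambda>k. column k P) ` S"
    then obtain k where "column k P = 0" by auto
    thus False using col_dot[OF P, of k k] by simp
  qed
qed

lemma sp_rank:
  fixes P :: "real^'n^'n"
  assumes P: "orthogonal_matrix P"
  shows "rank (P ** diagm m ** transpose P) = card {k. m k \<noteq> 0}"
proof -
  have "rank (P ** diagm m ** transpose P) = dim (span ((\<lambda>k. column k P) ` {k. m k \<noteq> 0}))"
    by (simp add: rank_dim_range sp_range[OF P])
  also have "\<dots> = card ((\<lambda>k. column k P) ` {k. m k \<noteq> 0})"
    using dim_eq_card_independent[OF col_indep[OF P]] by simp
  also have "\<dots> = card {k. m k \<noteq> 0}"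
    by (rule card_image) (use col_inj[OF P] in \<open>auto simp: inj_on_def\<close>)
  finally show ?thesis .
qed

lemma mp_uniq:
  fixes A X Y :: "real^'n^'n"
  assumes X: "A ** X ** A = A" "X ** A ** X = X" "transpose (A ** X) = A ** X" "transpose (X ** A) = X ** A"
  assumes Y: "A ** Y ** A = A" "Y ** A ** Y = Y" "transpose (A ** Y) = A ** Y" "transpose (Y ** A) = Y ** A"
  shows "Y = X"
proof -
  have "X = X ** (A ** X)" using X(2) by (simp add: matrix_mul_assoc)
  also have "\<dots> = X ** transpose (A ** X)" using X(3) by simp
  also have "A ** X = (A ** Y) ** (A ** X)" using Y(1) by (simp add: matrix_mul_assoc)
  also have "transpose ((A ** Y) ** (A ** X)) = (A ** X) ** (A ** Y)"
    using X(3) Y(3) by (simp add: matrix_transpose_mul)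
  also have "X ** ((A ** X) ** (A ** Y)) = (X ** A ** X) ** A ** Y" by (simp add: matrix_mul_assoc)
  also have "\<dots> = X ** A ** Y" using X(2) by simp
  finally have x: "X = X ** A ** Y" .
  have "Y = (Y ** A) ** Y" using Y(2) by (simp add: matrix_mul_assoc)
  also have "\<dots> = transpose (Y ** A) ** Y" using Y(4) by simp
  also have "Y ** A = Y ** (A ** X ** A)" using X(1) by simp
  also have "\<dots> = (Y ** A) ** (X ** A)" by (simp add: matrix_mul_assoc)
  also have "transpose ((Y ** A) ** (X ** A)) = (X ** A) ** (Y ** A)"
    using X(4) Y(4) by (simp add: matrix_transpose_mul)
  also have "((X ** A) ** (Y ** A)) ** Y = X ** A ** (Y ** A ** Y)" by (simp add: matrix_mul_assoc)
  also have "\<dots> = X ** A ** Y" using Y(2) by simp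
  finally have y: "Y = X ** A ** Y" .
  show ?thesis using x y by simp
qed

lemma pinv_eq:
  fixes A X :: "real^'n^'n"
  assumes X: "A ** X ** A = A" "X ** A ** X = X" "transpose (A ** X) = A ** X" "transpose (X ** A) = X ** A"
  shows "pinv A = X"
  unfolding pinv_def
proof (rule the_equality)
  show "A ** X ** A = A \<and> X ** A ** X = X \<and> transpose (A ** X) = A ** X \<and> transpose (X ** A) = X ** A"
    using X by blast
  fix Y assume "A ** Y ** A = A \<and> Y ** A ** Y = Y \<and> transpose (A ** Y) = A ** Y \<and> transpose (Y ** A) = Y ** A"
  thus "Y = X" using mp_uniq[OF X] by blast
qed

definition pinvd :: "real \<Rightarrow> real" where "pinvd x = (if x = 0 then 0 else 1 / x)"

lemma sp_pinv:
  fixes P :: "real^'n^'n"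
  assumes P: "orthogonal_matrix P"
  shows "pinv (P ** diagm m ** transpose P) = P ** diagm (\<lambda>k. pinvd (m k)) ** transpose P"
proof (rule pinv_eq)
  let ?A = "P ** diagm m ** transpose P" and ?X = "P ** diagm (\<lambda>k. pinvd (m k)) ** transpose P"
  have e1: "\<And>k. m k * pinvd (m k) * m k = m k" and e2: "\<And>k. pinvd (m k) * m k * pinvd (m k) = pinvd (m k)"
    by (auto simp: pinvd_def)
  show "?A ** ?X ** ?A = ?A" by (simp add: sp_mul[OF P] e1)
  show "?X ** ?A ** ?X = ?X" by (simp add: sp_mul[OF P] e2)
  show "transpose (?A ** ?X) = ?A ** ?X" by (simp add: sp_mul[OF P] sp_transpose)
  show "transpose (?X ** ?A) = ?X ** ?A" by (simp add: sp_mul[OF P] sp_transpose)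
qed

lemma sp_pdet:
  fixes P :: "real^'n^'n"
  assumes P: "orthogonal_matrix P"
  shows "pdet (P ** diagm m ** transpose P) = (\<Prod>k\<in>{k. m k \<noteq> 0}. m k)"
proof -
  let ?Z = "{k. m k \<noteq> 0}"
  have rk: "rank (P ** diagm m ** transpose P) = card ?Z" by (rule sp_rank[OF P])
  have dt: "det (P ** diagm m ** transpose P + e *\<^sub>R mat 1) = (\<Prod>k\<in>UNIV. m k + e)" for e
    by (simp add: sp_add_eps[OF P] sp_det[OF P])
  have cc: "CARD('n) - card ?Z = card (- ?Z)"
    by (simp add: Compl_eq_Diff_UNIV card_Diff_subset)
  have eq: "(\<Prod>k\<in>UNIV. m k + e) / e ^ (CARD('n) - card ?Z) = (\<Prod>k\<in>?Z. m k + e)"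
    if "e \<noteq> 0" for e :: real
  proof -
    have "(\<Prod>k\<in>UNIV. m k + e) = (\<Prod>k\<in>?Z. m k + e) * (\<Prod>k\<in>-?Z. m k + e)"
      by (metis (no_types, lifting) Compl_partition finite finite_Un prod.union_disjoint
          Compl_disjoint inf_commute)
    also have "(\<Prod>k\<in>-?Z. m k + e) = (\<Prod>k\<in>-?Z. e)" by (rule prod.cong) auto
    also have "\<dots> = e ^ card (- ?Z)" by simp
    finally show ?thesis using that cc by simp
  qed
  have ev: "eventually (\<lambda>e::real. e \<noteq> 0) (at 0)" by (simp add: eventually_at_filter)
  have lim0: "((\<lambda>e. (\<Prod>k\<in>?Z. m k + e)) \<longlongrightarrow> (\<Prod>k\<in>?Z. m k + 0)) (at (0::real))"
    by (intro tendsto_intros)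
  hence lim: "((\<lambda>e. (\<Prod>k\<in>?Z. m k + e)) \<longlongrightarrow> (\<Prod>k\<in>?Z. m k)) (at (0::real))"
    by simp
  have "((\<lambda>e. det (P ** diagm m ** transpose P + e *\<^sub>R mat 1) / e ^ (CARD('n) - rank (P ** diagm m ** transpose P)))
        \<longlongrightarrow> (\<Prod>k\<in>?Z. m k)) (at 0)"
    unfolding rk dt using tendsto_cong[OF eventually_mono[OF ev eq]] lim by simp
  thus ?thesis unfolding pdet_def by (rule tendsto_Lim[rotated]) simp
qed

lemma sum_mulv: "(\<Sum>i\<in>S. F i) *v y = (\<Sum>i\<in>S. F i *v y)" for F :: "'b \<Rightarrow> real^'n^'m"
proof (induction S rule: infinite_finite_induct)
  case (infinite S) then show ?case by (simp add: vec_eq_iff matrix_vector_mult_def)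
next
  case empty then show ?case by (simp add: vec_eq_iff matrix_vector_mult_def)
next
  case (insert x F) then show ?case by (simp add: matrix_vector_mult_add_rdistrib)
qed

lemma outer_mulv: "outer w *v y = (w \<bullet> y) *\<^sub>R w"
proof -
  have "(\<Sum>j\<in>UNIV. w $ i * w $ j * y $ j) = (\<Sum>j\<in>UNIV. w $ j * y $ j) * w $ i" for i
  proof -
    have "(\<Sum>j\<in>UNIV. w $ i * w $ j * y $ j) = w $ i * (\<Sum>j\<in>UNIV. w $ j * y $ j)"
      by (simp add: sum_distrib_left mult_ac)
    thus ?thesis by (simp add: mult.commute)
  qed
  thus ?thesis by (simp add: outer_def vec_eq_iff matrix_vector_mult_def inner_vec_def)
qed

lemma design_mulv: "design M A v p *v y = (\<Sum>j\<in>{1..M}. \<Sum>a\<in>A j. (p j a * (v j a \<bullet> y)) *\<^sub>R v j a)"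
  by (simp add: design_def sum_mulv outer_mulv scaleR_matrix_vector_assoc[symmetric])

lemma design_quad: "x \<bullet> (design M A v p *v y) = (\<Sum>j\<in>{1..M}. \<Sum>a\<in>A j. p j a * (v j a \<bullet> x) * (v j a \<bullet> y))"
  by (simp add: design_mulv inner_sum_right inner_commute mult.commute mult.left_commute)

lemma design_sym: "transpose (design M A v p) = design M A v p"
  by (simp add: design_def transpose_def outer_def vec_eq_iff sum_component mult.commute)

definition Sv :: "nat \<Rightarrow> (nat \<Rightarrow> 'a set) \<Rightarrow> (nat \<Rightarrow> 'a \<Rightarrow> real^'n) \<Rightarrow> (real^'n) set" where
  "Sv M A v = {v i a | i a. i \<in> {1..M} \<and> a \<in> A i}"

lemma Sv_mem: "i \<in> {1..M} \<Longrightarrow> a \<in> A i \<Longrightarrow> w i a \<in> Sv M A w"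
  unfolding Sv_def by blast

locale setting =
  fixes M :: nat and A :: "nat \<Rightarrow> 'a set" and v :: "nat \<Rightarrow> 'a \<Rightarrow> real^'n" and f :: "nat \<Rightarrow> real"
  assumes finA: "\<And>i. i \<in> {1..M} \<Longrightarrow> finite (A i)"
    and fpos: "\<And>i. i \<in> {1..M} \<Longrightarrow> f i > 0"
begin

abbreviation "V \<equiv> design M A v"
abbreviation "C \<equiv> Cbar M A v f"
abbreviation "D \<equiv> famrank M A v"

lemma C_nonneg: "p \<in> C \<Longrightarrow> i \<in> {1..M} \<Longrightarrow> a \<in> A i \<Longrightarrow> p i a \<ge> 0"
  by (auto simp: Cbar_def)

lemma C_sum: "p \<in> C \<Longrightarrow> i \<in> {1..M} \<Longrightarrow> (\<Sum>a\<in>A i. p i a) = f i"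
  by (auto simp: Cbar_def)

lemma A_ne: "p \<in> C \<Longrightarrow> i \<in> {1..M} \<Longrightarrow> A i \<noteq> {}"
  using C_sum fpos by fastforce

lemma C_span: "p \<in> C \<Longrightarrow> span (Sv M A (\<lambda>i a. p i a *\<^sub>R v i a)) = span (Sv M A v)"
proof -
  assume p: "p \<in> C"
  let ?Sp = "Sv M A (\<lambda>i a. p i a *\<^sub>R v i a)" and ?S = "Sv M A v"
  have sub: "?Sp \<subseteq> span ?S"
  proof
    fix y assume "y \<in> ?Sp"
    then obtain i a where y: "y = p i a *\<^sub>R v i a" "i \<in> {1..M}" "a \<in> A i" by (auto simp: Sv_def)
    have "v i a \<in> ?S" using y by (auto simp: Sv_def)
    thus "y \<in> span ?S" using y(1) by (simp add: span_base span_scale)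
  qed
  have "dim ?Sp = dim ?S" using p by (simp add: Cbar_def famrank_def Sv_def)
  hence "dim (span ?S) \<le> dim ?Sp" by simp
  hence "span ?Sp = span (span ?S)" using dim_eq_span[OF sub] by blast
  thus ?thesis by simp
qed

lemma V_quad_nonneg: "p \<in> C \<Longrightarrow> x \<bullet> (V p *v x) \<ge> 0"
proof -
  assume p: "p \<in> C"
  have "0 \<le> p j a * (v j a \<bullet> x) * (v j a \<bullet> x)" if "j \<in> {1..M}" "a \<in> A j" for j a
    using C_nonneg[OF p that] by (simp add: mult.assoc)
  thus ?thesis unfolding design_quad by (intro sum_nonneg) auto
qed

definition dec :: "(nat \<Rightarrow> 'a \<Rightarrow> real) \<Rightarrow> real^'n^'n \<Rightarrow> ('n \<Rightarrow> real) \<Rightarrow> bool" where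
  "dec p P l \<longleftrightarrow> orthogonal_matrix P \<and> V p = P ** diagm l ** transpose P"

lemma dec_ex: "\<exists>P l. dec p P l"
proof -
  obtain P l where "orthogonal_matrix P" "V p = P ** diagm l ** transpose P"
    using spectral[OF design_sym[of M A v p]] by blast
  thus ?thesis unfolding dec_def by blast
qed

lemma dec_l: "dec p P l \<Longrightarrow> l k = (\<Sum>j\<in>{1..M}. \<Sum>a\<in>A j. p j a * (v j a \<bullet> column k P)^2)"
proof -
  assume d: "dec p P l"
  hence P: "orthogonal_matrix P" and Vp: "V p = P ** diagm l ** transpose P" by (auto simp: dec_def)
  have "column k P \<bullet> (V p *v column k P) = l k"
    using Vp sp_eig[OF P] col_dot[OF P] by simp
  thus ?thesis by (simp add: design_quad power2_eq_square mult.assoc)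
qed

lemma dec_l_nonneg: "p \<in> C \<Longrightarrow> dec p P l \<Longrightarrow> l k \<ge> 0"
proof -
  assume p: "p \<in> C" and d: "dec p P l"
  have "0 \<le> p j a * (v j a \<bullet> column k P)^2" if "j \<in> {1..M}" "a \<in> A j" for j a
    using C_nonneg[OF p that] by simp
  thus ?thesis unfolding dec_l[OF d] by (intro sum_nonneg) auto
qed

lemma dec_zero:
  assumes p: "p \<in> C" and d: "dec p P l" and lk: "l k = 0" and i: "i \<in> {1..M}" and a: "a \<in> A i"
  shows "v i a \<bullet> column k P = 0"
proof -
  let ?c = "column k P"
  have "(\<Sum>j\<in>{1..M}. \<Sum>a\<in>A j. p j a * (v j a \<bullet> ?c)^2) = 0" using dec_l[OF d] lk by simp
  moreover have nn: "0 \<le> p j a * (v j a \<bullet> ?c)^2" if "j \<in> {1..M}" "a \<in> A j" for j a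
    using C_nonneg[OF p that] by simp
  ultimately have "\<forall>j\<in>{1..M}. (\<Sum>a\<in>A j. p j a * (v j a \<bullet> ?c)^2) = 0"
    using sum_nonneg_eq_0_iff[of "{1..M}" "\<lambda>j. \<Sum>a\<in>A j. p j a * (v j a \<bullet> ?c)^2"]
    by (simp add: sum_nonneg)
  have z: "\<forall>j\<in>{1..M}. \<forall>a\<in>A j. p j a * (v j a \<bullet> ?c)^2 = 0"
  proof (intro ballI)
    fix j a assume j: "j \<in> {1..M}" and a: "a \<in> A j"
    have "(\<Sum>a\<in>A j. p j a * (v j a \<bullet> ?c)^2) = 0" using \<open>\<forall>j\<in>{1..M}. _\<close> j by blast
    thus "p j a * (v j a \<bullet> ?c)^2 = 0"
      using sum_nonneg_eq_0_iff[OF finA[OF j], of "\<lambda>a. p j a * (v j a \<bullet> ?c)^2"] nn[OF j] a by blast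
  qed
  have orth: "orthogonal ?c y" if "y \<in> Sv M A (\<lambda>i a. p i a *\<^sub>R v i a)" for y
  proof -
    from that obtain j b where y: "y = p j b *\<^sub>R v j b" "j \<in> {1..M}" "b \<in> A j" by (auto simp: Sv_def)
    hence "p j b * (v j b \<bullet> ?c)^2 = 0" using z by blast
    hence "p j b * (v j b \<bullet> ?c) = 0" by (simp add: power2_eq_square)
    thus ?thesis using y by (simp add: orthogonal_def inner_commute)
  qed
  have "v i a \<in> span (Sv M A (\<lambda>i a. p i a *\<^sub>R v i a))"
    using C_span[OF p] i a by (auto simp: Sv_def intro!: span_base)
  hence "orthogonal ?c (v i a)" using orthogonal_to_span orth by blast
  thus ?thesis by (simp add: orthogonal_def inner_commute)
qed

lemma dec_card:
  assumes p: "p \<in> C" and d: "dec p P l"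
  shows "card {k. l k \<noteq> 0} = D"
proof -
  have P: "orthogonal_matrix P" and Vp: "V p = P ** diagm l ** transpose P" using d by (auto simp: dec_def)
  let ?Sp = "Sv M A (\<lambda>i a. p i a *\<^sub>R v i a)" and ?CZ = "(\<lambda>k. column k P) ` {k. l k \<noteq> 0}"
  have "span ?Sp \<subseteq> span ?CZ"
  proof (rule span_minimal[OF _ subspace_span], clarify)
    fix y assume "y \<in> ?Sp"
    then obtain j b where y: "y = p j b *\<^sub>R v j b" "j \<in> {1..M}" "b \<in> A j" by (auto simp: Sv_def)
    have "y = (\<Sum>k\<in>UNIV. (column k P \<bullet> y) *\<^sub>R column k P)" by (rule sp_expand[OF P])
    also have "\<dots> \<in> span ?CZ"
    proof (rule span_sum)
      fix k
      show "(column k P \<bullet> y) *\<^sub>R column k P \<in> span ?CZ"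
      proof (cases "l k = 0")
        case True
        hence "column k P \<bullet> y = 0" using dec_zero[OF p d True y(2,3)] y(1) by (simp add: inner_commute)
        thus ?thesis by (simp add: span_zero)
      next
        case False thus ?thesis by (auto intro: span_scale span_base)
      qed
    qed
    finally show "y \<in> span ?CZ" .
  qed
  moreover have "span ?CZ \<subseteq> span ?Sp"
  proof -
    have "span ?CZ = range ((*v) (V p))" using sp_range[OF P] Vp by simp
    also have "\<dots> \<subseteq> span ?Sp"
    proof clarify
      fix y
      have "V p *v y = (\<Sum>j\<in>{1..M}. \<Sum>a\<in>A j. (v j a \<bullet> y) *\<^sub>R (p j a *\<^sub>R v j a))"
        by (simp add: design_mulv mult.commute)
      also have "\<dots> \<in> span ?Sp"
      proof (intro span_sum)
        fix j a assume "j \<in> {1..M}" "a \<in> A j"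
        from Sv_mem[where w="\<lambda>i a. p i a *\<^sub>R v i a" and M=M and A=A, OF this]
        show "(v j a \<bullet> y) *\<^sub>R (p j a *\<^sub>R v j a) \<in> span ?Sp"
          by (intro span_scale span_base) simp
      qed
      finally show "V p *v y \<in> span ?Sp" .
    qed
    finally show ?thesis .
  qed
  ultimately have eq: "span ?Sp = span ?CZ" by blast
  have "D = dim ?Sp" using p by (simp add: Cbar_def famrank_def Sv_def)
  also have "\<dots> = dim ?CZ" using dim_span[of ?Sp] dim_span[of ?CZ] eq by simp
  also have "\<dots> = card ?CZ" using dim_eq_card_independent[OF col_indep[OF P]] by simp
  also have "\<dots> = card {k. l k \<noteq> 0}"
    by (rule card_image) (use col_inj[OF P] in \<open>auto simp: inj_on_def\<close>)
  finally show ?thesis by simp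
qed

definition gv :: "(nat \<Rightarrow> 'a \<Rightarrow> real) \<Rightarrow> real^'n \<Rightarrow> real" where
  "gv p y = y \<bullet> (pinv (V p) *v y)"

lemma dec_gv:
  assumes d: "dec p P l"
  shows "gv p y = (\<Sum>k\<in>{k. l k \<noteq> 0}. (column k P \<bullet> y)^2 / l k)"
proof -
  have P: "orthogonal_matrix P" and Vp: "V p = P ** diagm l ** transpose P" using d by (auto simp: dec_def)
  have "gv p y = (\<Sum>k\<in>UNIV. pinvd (l k) * (column k P \<bullet> y) * (column k P \<bullet> y))"
    by (simp add: gv_def Vp sp_pinv[OF P] sp_quad)
  also have "\<dots> = (\<Sum>k\<in>{k. l k \<noteq> 0}. (column k P \<bullet> y)^2 / l k)"
    by (rule sum.mono_neutral_cong_right) (auto simp: pinvd_def power2_eq_square)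
  finally show ?thesis .
qed

lemma dec_pdet:
  assumes d: "dec p P l"
  shows "pdet (V p) = (\<Prod>k\<in>{k. l k \<noteq> 0}. l k)"
  using d sp_pdet by (auto simp: dec_def)

lemma pdet_pos: "p \<in> C \<Longrightarrow> pdet (V p) > 0"
proof -
  assume p: "p \<in> C"
  obtain P l where d: "dec p P l" using dec_ex by blast
  have "(\<Prod>k\<in>{k. l k \<noteq> 0}. l k) > 0"
    using dec_l_nonneg[OF p d] by (intro prod_pos) (auto simp: less_le)
  thus ?thesis using dec_pdet[OF d] by simp
qed

lemma sum_gv:
  assumes p: "p \<in> C"
  shows "(\<Sum>j\<in>{1..M}. \<Sum>a\<in>A j. p j a * gv p (v j a)) = D"
proof -
  obtain P l where d: "dec p P l" using dec_ex by blast
  let ?Z = "{k. l k \<noteq> 0}"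
  have "(\<Sum>j\<in>{1..M}. \<Sum>a\<in>A j. p j a * gv p (v j a))
      = (\<Sum>j\<in>{1..M}. \<Sum>a\<in>A j. \<Sum>k\<in>?Z. p j a * (v j a \<bullet> column k P)^2 / l k)"
    by (simp add: dec_gv[OF d] sum_distrib_left inner_commute)
  also have "\<dots> = (\<Sum>k\<in>?Z. (\<Sum>j\<in>{1..M}. \<Sum>a\<in>A j. p j a * (v j a \<bullet> column k P)^2) / l k)"
    by (simp add: sum.swap[of _ ?Z] sum_divide_distrib)
  also have "\<dots> = (\<Sum>k\<in>?Z. 1)"
    by (rule sum.cong[OF refl]) (metis (mono_tags, lifting) dec_l[OF d] divide_self mem_Collect_eq)
  also have "\<dots> = D" using dec_card[OF p d] by simp
  finally show ?thesis .
qed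

lemma G_ge:
  assumes p: "p \<in> C"
  shows "Gbar M A v f p \<ge> D"
proof -
  have "real D = (\<Sum>j\<in>{1..M}. \<Sum>a\<in>A j. p j a * gv p (v j a))" using sum_gv[OF p] by simp
  also have "\<dots> \<le> (\<Sum>j\<in>{1..M}. f j * Max ((\<lambda>a. gv p (v j a)) ` A j))"
  proof (rule sum_mono)
    fix j assume j: "j \<in> {1..M}"
    have "(\<Sum>a\<in>A j. p j a * gv p (v j a)) \<le> (\<Sum>a\<in>A j. p j a * Max ((\<lambda>a. gv p (v j a)) ` A j))"
      using finA[OF j] C_nonneg[OF p j] by (intro sum_mono mult_left_mono) auto
    also have "\<dots> = f j * Max ((\<lambda>a. gv p (v j a)) ` A j)"
      using C_sum[OF p j] by (simp add: sum_distrib_right[symmetric])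
    finally show "(\<Sum>a\<in>A j. p j a * gv p (v j a)) \<le> f j * Max ((\<lambda>a. gv p (v j a)) ` A j)" .
  qed
  also have "\<dots> = Gbar M A v f p" by (simp add: Gbar_def gv_def)
  finally show ?thesis .
qed

end

definition Rm :: "real^'n^'n \<Rightarrow> ('n \<Rightarrow> real) \<Rightarrow> real^'n^'n" where
  "Rm P d = P ** diagm (\<lambda>k. 1 / sqrt (d k)) ** transpose P"

lemma isq: "(d::real) > 0 \<Longrightarrow> 1 / sqrt d * (1 / sqrt d) = 1 / d"
proof -
  assume "d > 0"
  hence "sqrt d * sqrt d = d" by simp
  have "1 / sqrt d * (1 / sqrt d) = 1 / (sqrt d * sqrt d)" by simp
  also have "\<dots> = 1 / d" using \<open>sqrt d * sqrt d = d\<close> by simp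
  finally show ?thesis .
qed

lemma isq2: "(d::real) > 0 \<Longrightarrow> 1 / sqrt d * d * (1 / sqrt d) = 1"
proof -
  assume "d > 0"
  hence "1 / sqrt d * d * (1 / sqrt d) = d * (1 / sqrt d * (1 / sqrt d))" by (simp add: algebra_simps)
  also have "\<dots> = 1" using isq[OF \<open>d > 0\<close>] \<open>d > 0\<close> by simp
  finally show ?thesis .
qed

lemma Rm_sym: "transpose (Rm P d) = Rm P d"
  unfolding Rm_def by (rule sp_transpose)

lemma Rm_dot: "(Rm P d *v x) \<bullet> y = x \<bullet> (Rm P d *v y)"
  using symm_dot[OF Rm_sym, of x P d y] by simp

lemma Rm_norm:
  assumes P: "orthogonal_matrix P" and dpos: "\<And>k. d k > 0"
  shows "(Rm P d *v y) \<bullet> (Rm P d *v y) = (\<Sum>j\<in>UNIV. (column j P \<bullet> y)^2 / d j)"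
proof -
  have RR: "Rm P d ** Rm P d = P ** diagm (\<lambda>k. 1 / d k) ** transpose P"
  proof -
    have "\<And>k. 1 / sqrt (d k) * (1 / sqrt (d k)) = 1 / d k"
      using dpos isq by blast
    thus ?thesis unfolding Rm_def by (simp add: sp_mul[OF P])
  qed
  have "(Rm P d *v y) \<bullet> (Rm P d *v y) = y \<bullet> (Rm P d *v (Rm P d *v y))" by (rule Rm_dot)
  also have "\<dots> = y \<bullet> ((Rm P d ** Rm P d) *v y)" by (simp add: matrix_vector_mul_assoc)
  also have "\<dots> = (\<Sum>j\<in>UNIV. (column j P \<bullet> y)^2 / d j)"
    unfolding RR sp_quad by (simp add: power2_eq_square)
  finally show ?thesis .
qed

lemma Rm_id:
  assumes P: "orthogonal_matrix P" and dpos: "\<And>k. d k > 0"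
  shows "Rm P d ** (P ** diagm d ** transpose P) ** Rm P d = mat 1"
proof -
  have "\<And>k. 1 / sqrt (d k) * d k * (1 / sqrt (d k)) = 1"
    using dpos isq2 by blast
  thus ?thesis unfolding Rm_def by (simp add: sp_mul[OF P] sp_mat1[OF P, symmetric])
qed

lemma ratio:
  fixes P X :: "real^'n^'n" and d :: "'n \<Rightarrow> real"
  assumes P: "orthogonal_matrix P" and dpos: "\<And>k. d k > 0" and X: "transpose X = X"
  obtains Q \<mu> where "orthogonal_matrix Q"
    "det X = (\<Prod>k\<in>UNIV. d k) * (\<Prod>k\<in>UNIV. \<mu> k)"
    "\<And>k. \<mu> k = (Rm P d *v column k Q) \<bullet> (X *v (Rm P d *v column k Q))"
proof -
  let ?R = "Rm P d"
  define Y where "Y = ?R ** X ** ?R"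
  have Ys: "transpose Y = Y"
    unfolding Y_def by (simp add: matrix_transpose_mul Rm_sym X matrix_mul_assoc)
  obtain Q \<mu> where Q: "orthogonal_matrix Q" and Yd: "Y = Q ** diagm \<mu> ** transpose Q"
    using spectral[OF Ys] by blast
  have detY: "det Y = (\<Prod>k\<in>UNIV. \<mu> k)" using Yd sp_det[OF Q] by simp
  have detR: "det ?R = (\<Prod>k\<in>UNIV. 1 / sqrt (d k))" unfolding Rm_def by (rule sp_det[OF P])
  have "(\<Prod>k\<in>UNIV. d k) * (det ?R * det ?R) = (\<Prod>k\<in>UNIV. d k * (1 / sqrt (d k) * (1 / sqrt (d k))))"
    unfolding detR prod.distrib by (simp only: mult.assoc)
  also have "\<dots> = 1"
  proof (rule prod.neutral, rule ballI)
    fix k show "d k * (1 / sqrt (d k) * (1 / sqrt (d k))) = 1" using isq[OF dpos[of k]] dpos[of k] by simp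
  qed
  finally have dr: "(\<Prod>k\<in>UNIV. d k) * (det ?R * det ?R) = 1" .
  have "det Y = det ?R * det X * det ?R" unfolding Y_def by (simp add: det_mul)
  hence "det X = (\<Prod>k\<in>UNIV. d k) * det Y" using dr by (simp add: algebra_simps)
  hence dX: "det X = (\<Prod>k\<in>UNIV. d k) * (\<Prod>k\<in>UNIV. \<mu> k)" using detY by simp
  have mu: "\<mu> k = (?R *v column k Q) \<bullet> (X *v (?R *v column k Q))" for k
  proof -
    have "column k Q \<bullet> (Y *v column k Q) = \<mu> k"
      using Yd sp_eig[OF Q] col_dot[OF Q] by simp
    moreover have "column k Q \<bullet> (Y *v column k Q) = (?R *v column k Q) \<bullet> (X *v (?R *v column k Q))"
      unfolding Y_def by (simp add: matrix_vector_mul_assoc[symmetric] Rm_dot)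
    ultimately show ?thesis by simp
  qed
  show ?thesis using that[OF Q dX mu] .
qed

lemma prod_split:
  fixes l :: "'n::finite \<Rightarrow> real"
  shows "(\<Prod>k\<in>UNIV. l k + e) = (\<Prod>k\<in>{k. l k \<noteq> 0}. l k + e) * e ^ card (- {k. l k \<noteq> 0})"
proof -
  let ?Z = "{k. l k \<noteq> 0}"
  have "(\<Prod>k\<in>UNIV. l k + e) = (\<Prod>k\<in>?Z. l k + e) * (\<Prod>k\<in>-?Z. l k + e)"
    by (metis (no_types, lifting) Compl_partition finite finite_Un prod.union_disjoint
        Compl_disjoint inf_commute)
  also have "(\<Prod>k\<in>-?Z. l k + e) = (\<Prod>k\<in>-?Z. e)" by (rule prod.cong) auto
  also have "\<dots> = e ^ card (- ?Z)" by simp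
  finally show ?thesis .
qed

lemma card_compl: "card (- (Z::'n::finite set)) = CARD('n) - card Z"
  by (simp add: Compl_eq_Diff_UNIV card_Diff_subset)

lemma lim_le:
  fixes L R :: "real \<Rightarrow> real"
  assumes "\<And>e. e > 0 \<Longrightarrow> L e \<le> R e" "(L \<longlongrightarrow> a) (at_right 0)" "(R \<longlongrightarrow> b) (at_right 0)"
  shows "a \<le> b"
proof (rule tendsto_le[OF _ assms(3) assms(2)])
  show "at_right (0::real) \<noteq> bot" by simp
  show "eventually (\<lambda>e. L e \<le> R e) (at_right 0)"
    using assms(1) by (simp add: eventually_at_filter)
qed

lemma ln_lower: "-1/2 \<le> (x::real) \<Longrightarrow> x \<le> 1 \<Longrightarrow> x - 2 * x^2 \<le> ln (1 + x)"
proof (cases "x \<ge> 0")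
  case True
  assume "x \<le> 1"
  hence "x - x^2 \<le> ln (1 + x)" using True ln_one_plus_pos_lower_bound by blast
  moreover have "x^2 \<ge> 0" by simp
  ultimately show ?thesis by linarith
next
  case False
  assume "-1/2 \<le> x"
  hence "- (-x) - 2 * (-x)^2 \<le> ln (1 - (-x))"
    using False by (intro ln_one_minus_pos_lower_bound) auto
  thus ?thesis by simp
qed

lemma exp_lower: "-1/2 \<le> (x::real) \<Longrightarrow> x \<le> 1 \<Longrightarrow> exp (x - 2 * x^2) \<le> 1 + x"
proof -
  assume a: "-1/2 \<le> x" "x \<le> 1"
  have "exp (x - 2 * x^2) \<le> exp (ln (1 + x))" using ln_lower[OF a] by simp
  also have "\<dots> = 1 + x" using a by simp
  finally show ?thesis .
qed

lemma sum_split_Z: "sum g (UNIV::'n::finite set) = sum g Z + sum g (- Z)"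
  using sum.subset_diff[of Z UNIV g] by (simp add: Compl_eq_Diff_UNIV add.commute)

lemma prod_split_Z: "prod g (UNIV::'n::finite set) = prod g Z * prod g (- Z)"
  using prod.subset_diff[of Z UNIV g] by (simp add: Compl_eq_Diff_UNIV mult.commute)

lemma ratio_ex:
  fixes P X :: "real^'n^'n" and d :: "'n \<Rightarrow> real"
  assumes P: "orthogonal_matrix P" and dpos: "\<And>k. d k > 0" and X: "transpose X = X"
  shows "\<exists>Q \<mu>. orthogonal_matrix Q \<and> det X = (\<Prod>k\<in>UNIV. d k) * (\<Prod>k\<in>UNIV. \<mu> k)
    \<and> (\<forall>k. \<mu> k = (Rm P d *v column k Q) \<bullet> (X *v (Rm P d *v column k Q)))"
  by (rule ratio[where d=d, OF P dpos X]) blast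

context setting begin

lemma Xmulv: "(V p + e *\<^sub>R mat 1) *v w = V p *v w + e *\<^sub>R w"
  by (simp add: matrix_vector_mult_add_rdistrib scaleR_matrix_vector_assoc[symmetric])

lemma h_Z:
  assumes p: "p \<in> C" and d: "dec p P l" and i: "i \<in> {1..M}" and a: "a \<in> A i"
  shows "(\<Sum>k\<in>UNIV. (column k P \<bullet> v i a)^2 / (l k + e)) = (\<Sum>k\<in>{k. l k \<noteq> 0}. (column k P \<bullet> v i a)^2 / (l k + e))"
proof -
  have z: "\<And>k. l k = 0 \<Longrightarrow> column k P \<bullet> v i a = 0"
    using dec_zero[OF p d _ i a] by (simp add: inner_commute)
  show ?thesis by (rule sum.mono_neutral_cong_right) (auto simp: z)
qed

lemma eps_Z:
  assumes e: "e > 0"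
  shows "e * (\<Sum>k\<in>UNIV. 1 / (l k + e)) = (\<Sum>k\<in>{k. l k \<noteq> 0}. e / (l k + e)) + real (card (- {k. (l::'n \<Rightarrow> real) k \<noteq> 0}))"
proof -
  let ?Z = "{k. l k \<noteq> 0}"
  have "e * (\<Sum>k\<in>UNIV. 1 / (l k + e)) = (\<Sum>k\<in>UNIV. e / (l k + e))" by (simp add: sum_distrib_left)
  also have "\<dots> = (\<Sum>k\<in>?Z. e / (l k + e)) + (\<Sum>k\<in>-?Z. e / (l k + e))" by (rule sum_split_Z)
  also have "(\<Sum>k\<in>-?Z. e / (l k + e)) = (\<Sum>k\<in>-?Z. 1)" using e by (intro sum.cong) auto
  finally show ?thesis by simp
qed

lemma dec_basic:
  assumes p: "p \<in> C" and d: "dec p P l"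
  shows "orthogonal_matrix P" "V p = P ** diagm l ** transpose P" "\<And>k. l k \<ge> 0"
    "\<And>k. k \<in> {k. l k \<noteq> 0} \<Longrightarrow> l k > 0" "card {k. l k \<noteq> 0} = D"
    "pdet (V p) = (\<Prod>k\<in>{k. l k \<noteq> 0}. l k)"
  using d dec_l_nonneg[OF p d] dec_card[OF p d] dec_pdet[OF d]
  by (auto simp: dec_def less_le)

lemma mu_prod_le:
  fixes \<mu> :: "'n \<Rightarrow> real"
  assumes "\<And>k. \<mu> k \<ge> 0"
  shows "(\<Prod>k\<in>UNIV. \<mu> k) \<le> exp ((\<Sum>k\<in>UNIV. \<mu> k) - real CARD('n))"
proof -
  have "(\<Prod>k\<in>UNIV. \<mu> k) \<le> (\<Prod>k\<in>UNIV. exp (\<mu> k - 1))"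
  proof (rule prod_mono)
    fix k :: 'n
    have "1 + (\<mu> k - 1) \<le> exp (\<mu> k - 1)" by (rule exp_ge_add_one_self)
    thus "0 \<le> \<mu> k \<and> \<mu> k \<le> exp (\<mu> k - 1)" using assms[of k] by simp
  qed
  also have "\<dots> = exp (\<Sum>k\<in>UNIV. \<mu> k - 1)" by (simp add: exp_sum)
  also have "(\<Sum>k\<in>UNIV. \<mu> k - 1) = (\<Sum>k\<in>UNIV. \<mu> k) - real CARD('n)"
    by (simp add: sum_subtractf)
  finally show ?thesis .
qed

lemma sum_wv:
  fixes P Q :: "real^'n^'n"
  assumes P: "orthogonal_matrix P" and Q: "orthogonal_matrix Q" and dpos: "\<And>k. d k > 0"
  shows "(\<Sum>k\<in>UNIV. ((Rm P d *v column k Q) \<bullet> y)^2) = (\<Sum>i\<in>UNIV. (column i P \<bullet> y)^2 / d i)"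
proof -
  have "(\<Sum>k\<in>UNIV. ((Rm P d *v column k Q) \<bullet> y)^2) = (\<Sum>k\<in>UNIV. (column k Q \<bullet> (Rm P d *v y))^2)"
    by (simp add: Rm_dot)
  also have "\<dots> = (Rm P d *v y) \<bullet> (Rm P d *v y)" by (rule parseval[OF Q])
  also have "\<dots> = (\<Sum>i\<in>UNIV. (column i P \<bullet> y)^2 / d i)" by (rule Rm_norm[OF P dpos])
  finally show ?thesis .
qed

lemma sum_ww:
  fixes P Q :: "real^'n^'n"
  assumes P: "orthogonal_matrix P" and Q: "orthogonal_matrix Q" and dpos: "\<And>k. d k > 0"
  shows "(\<Sum>k\<in>UNIV. (Rm P d *v column k Q) \<bullet> (Rm P d *v column k Q)) = (\<Sum>i\<in>UNIV. 1 / d i)"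
proof -
  have "(\<Sum>k\<in>UNIV. (Rm P d *v column k Q) \<bullet> (Rm P d *v column k Q))
      = (\<Sum>k\<in>UNIV. \<Sum>i\<in>UNIV. (column i P \<bullet> column k Q)^2 / d i)"
    by (simp add: Rm_norm[OF P dpos])
  also have "\<dots> = (\<Sum>i\<in>UNIV. \<Sum>k\<in>UNIV. (column i P \<bullet> column k Q)^2 / d i)"
    by (rule sum.swap)
  also have "\<dots> = (\<Sum>i\<in>UNIV. (\<Sum>k\<in>UNIV. (column k Q \<bullet> column i P)^2) / d i)"
    by (simp add: sum_divide_distrib inner_commute)
  also have "\<dots> = (\<Sum>i\<in>UNIV. 1 / d i)"
    by (simp add: parseval[OF Q] col_dot[OF P])
  finally show ?thesis .
qed

lemma concave:
  assumes p0: "p0 \<in> C" and p: "p \<in> C"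
  shows "pdet (V p) \<le> pdet (V p0) * exp ((\<Sum>j\<in>{1..M}. \<Sum>a\<in>A j. p j a * gv p0 (v j a)) - real D)"
proof -
  obtain P l where d0: "dec p0 P l" using dec_ex by blast
  obtain P' l' where d1: "dec p P' l'" using dec_ex by blast
  note b0 = dec_basic[OF p0 d0] and b1 = dec_basic[OF p d1]
  have P: "orthogonal_matrix P" and P': "orthogonal_matrix P'" using b0 b1 by auto
  let ?Z = "{k. l k \<noteq> 0}" and ?Z' = "{k. l' k \<noteq> 0}"
  have cc: "card (- ?Z) = card (- ?Z')" using b0(5) b1(5) by (simp add: card_compl)
  define T where "T e = (\<Sum>j\<in>{1..M}. \<Sum>a\<in>A j. p j a * (\<Sum>k\<in>?Z. (column k P \<bullet> v j a)^2 / (l k + e)))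
      + (\<Sum>k\<in>?Z. e / (l k + e)) + real (card (- ?Z)) - real CARD('n)" for e
  have ineq: "(\<Prod>k\<in>?Z'. l' k + e) \<le> (\<Prod>k\<in>?Z. l k + e) * exp (T e)" if e: "e > 0" for e
  proof -
    define d where "d k = l k + e" for k
    have dpos: "d k > 0" for k using b0(3)[of k] e by (simp add: d_def)
    let ?X = "V p + e *\<^sub>R mat 1"
    have Xe: "?X = P' ** diagm (\<lambda>k. l' k + e) ** transpose P'"
      using b1(2) sp_add_eps[OF P'] by simp
    have Xs: "transpose ?X = ?X" unfolding Xe by (rule sp_transpose)
    obtain Q \<mu> where H: "orthogonal_matrix Q \<and> det ?X = (\<Prod>k\<in>UNIV. d k) * (\<Prod>k\<in>UNIV. \<mu> k)
       \<and> (\<forall>k. \<mu> k = (Rm P d *v column k Q) \<bullet> (?X *v (Rm P d *v column k Q)))"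
      using ratio_ex[where d=d, OF P dpos Xs] by blast
    have Q: "orthogonal_matrix Q" and dX: "det ?X = (\<Prod>k\<in>UNIV. d k) * (\<Prod>k\<in>UNIV. \<mu> k)"
      and mu: "\<And>k. \<mu> k = (Rm P d *v column k Q) \<bullet> (?X *v (Rm P d *v column k Q))"
      using H by auto
    define w where "w k = Rm P d *v column k Q" for k
    have mu': "\<mu> k = w k \<bullet> (V p *v w k) + e * (w k \<bullet> w k)" for k
      unfolding mu w_def Xmulv by (simp add: inner_add_right)
    have mu_nn: "\<mu> k \<ge> 0" for k
      unfolding mu' using V_quad_nonneg[OF p, of "w k"] e by simp
    have "(\<Sum>k\<in>UNIV. w k \<bullet> (V p *v w k))
        = (\<Sum>k\<in>UNIV. \<Sum>j\<in>{1..M}. \<Sum>a\<in>A j. p j a * (w k \<bullet> v j a)^2)"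
      by (simp add: design_quad power2_eq_square inner_commute mult.assoc)
    also have "\<dots> = (\<Sum>j\<in>{1..M}. \<Sum>k\<in>UNIV. \<Sum>a\<in>A j. p j a * (w k \<bullet> v j a)^2)"
      by (rule sum.swap)
    also have "\<dots> = (\<Sum>j\<in>{1..M}. \<Sum>a\<in>A j. \<Sum>k\<in>UNIV. p j a * (w k \<bullet> v j a)^2)"
      by (intro sum.cong refl sum.swap)
    also have "\<dots> = (\<Sum>j\<in>{1..M}. \<Sum>a\<in>A j. p j a * (\<Sum>k\<in>UNIV. (w k \<bullet> v j a)^2))"
      by (simp add: sum_distrib_left)
    also have "\<dots> = (\<Sum>j\<in>{1..M}. \<Sum>a\<in>A j. p j a * (\<Sum>k\<in>?Z. (column k P \<bullet> v j a)^2 / (l k + e)))"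
    proof (intro sum.cong refl)
      fix j a assume j: "j \<in> {1..M}" and a: "a \<in> A j"
      have "(\<Sum>k\<in>UNIV. (w k \<bullet> v j a)^2) = (\<Sum>i\<in>UNIV. (column i P \<bullet> v j a)^2 / d i)"
        unfolding w_def by (rule sum_wv[OF P Q dpos])
      also have "\<dots> = (\<Sum>k\<in>?Z. (column k P \<bullet> v j a)^2 / (l k + e))"
        unfolding d_def by (rule h_Z[OF p0 d0 j a])
      finally show "p j a * (\<Sum>k\<in>UNIV. (w k \<bullet> v j a)^2) = p j a * (\<Sum>k\<in>?Z. (column k P \<bullet> v j a)^2 / (l k + e))"
        by simp
    qed
    finally have s1: "(\<Sum>k\<in>UNIV. w k \<bullet> (V p *v w k))
        = (\<Sum>j\<in>{1..M}. \<Sum>a\<in>A j. p j a * (\<Sum>k\<in>?Z. (column k P \<bullet> v j a)^2 / (l k + e)))" .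
    have "(\<Sum>k\<in>UNIV. e * (w k \<bullet> w k)) = e * (\<Sum>i\<in>UNIV. 1 / (l i + e))"
      unfolding w_def sum_distrib_left[symmetric] sum_ww[OF P Q dpos] d_def ..
    also have "\<dots> = (\<Sum>k\<in>?Z. e / (l k + e)) + real (card (- ?Z))" by (rule eps_Z[OF e])
    finally have s2: "(\<Sum>k\<in>UNIV. e * (w k \<bullet> w k)) = (\<Sum>k\<in>?Z. e / (l k + e)) + real (card (- ?Z))" .
    have summu: "(\<Sum>k\<in>UNIV. \<mu> k) - real CARD('n) = T e"
      unfolding mu' sum.distrib s1 s2 T_def by simp
    have "(\<Prod>k\<in>UNIV. l' k + e) = det ?X" unfolding Xe by (simp add: sp_det[OF P'])
    also have "\<dots> \<le> (\<Prod>k\<in>UNIV. d k) * exp (T e)"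
      unfolding dX summu[symmetric]
      by (rule mult_left_mono[OF mu_prod_le]) (use dpos mu_nn in \<open>auto intro: prod_nonneg less_imp_le\<close>)
    finally have "(\<Prod>k\<in>UNIV. l' k + e) \<le> (\<Prod>k\<in>UNIV. l k + e) * exp (T e)" by (simp add: d_def)
    hence "(\<Prod>k\<in>?Z'. l' k + e) * e ^ card (- ?Z) \<le> ((\<Prod>k\<in>?Z. l k + e) * exp (T e)) * e ^ card (- ?Z)"
      unfolding prod_split[of l' e] prod_split[of l e] cc by (simp add: mult_ac)
    moreover have "e ^ card (- ?Z) > 0" using e by simp
    ultimately show ?thesis by simp
  qed
  define T0 where "T0 = (\<Sum>j\<in>{1..M}. \<Sum>a\<in>A j. p j a * (\<Sum>k\<in>?Z. (column k P \<bullet> v j a)^2 / (l k + 0)))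
      + (\<Sum>k\<in>?Z. 0 / (l k + 0)) + real (card (- ?Z)) - real CARD('n)"
  have limL: "((\<lambda>e. \<Prod>k\<in>?Z'. l' k + e) \<longlongrightarrow> (\<Prod>k\<in>?Z'. l' k + 0)) (at_right 0)"
    by (intro tendsto_intros)
  have limT: "(T \<longlongrightarrow> T0) (at_right 0)"
    unfolding T_def T0_def using b0(4) by (intro tendsto_intros) auto
  have limR: "((\<lambda>e. (\<Prod>k\<in>?Z. l k + e) * exp (T e)) \<longlongrightarrow> (\<Prod>k\<in>?Z. l k + 0) * exp T0) (at_right 0)"
    by (intro tendsto_intros limT)
  have le: "(\<Prod>k\<in>?Z'. l' k + 0) \<le> (\<Prod>k\<in>?Z. l k + 0) * exp T0"
    by (rule lim_le[OF ineq limL limR])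
  have T0e: "T0 = (\<Sum>j\<in>{1..M}. \<Sum>a\<in>A j. p j a * gv p0 (v j a)) - real D"
  proof -
    have "(\<Sum>k\<in>?Z. (column k P \<bullet> v j a)^2 / (l k + 0)) = gv p0 (v j a)" for j a
      by (simp add: dec_gv[OF d0])
    moreover have "real (card (- ?Z)) - real CARD('n) = - real D"
      using b0(5) card_mono[of UNIV ?Z] by (simp add: card_compl of_nat_diff)
    ultimately show ?thesis unfolding T0_def by simp
  qed
  show ?thesis using le unfolding T0e b0(6) b1(6) by simp
qed

end

definition shift :: "(nat \<Rightarrow> 'a \<Rightarrow> real) \<Rightarrow> nat \<Rightarrow> 'a \<Rightarrow> 'a \<Rightarrow> real \<Rightarrow> nat \<Rightarrow> 'a \<Rightarrow> real" where
  "shift p i a b t = (\<lambda>j e. p j e + (if j = i \<and> e = b then t else 0) - (if j = i \<and> e = a then t else 0))"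

context setting begin

lemma gv_nonneg: "gv p y \<ge> 0" if p: "p \<in> C"
proof -
  obtain P l where d: "dec p P l" using dec_ex by blast
  show ?thesis unfolding dec_gv[OF d]
    using dec_l_nonneg[OF p d] by (intro sum_nonneg) (auto intro: divide_nonneg_nonneg)
qed

lemma h_le_g:
  assumes p: "p \<in> C" and d: "dec p P l" and e: "e > 0"
  shows "(\<Sum>k\<in>{k. l k \<noteq> 0}. (column k P \<bullet> y)^2 / (l k + e)) \<le> gv p y"
  unfolding dec_gv[OF d]
proof (rule sum_mono)
  fix k assume "k \<in> {k. l k \<noteq> 0}"
  hence lk: "l k > 0" using dec_l_nonneg[OF p d, of k] by auto
  show "(column k P \<bullet> y)^2 / (l k + e) \<le> (column k P \<bullet> y)^2 / l k"
    using lk e by (intro divide_left_mono) auto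
qed

lemma support_C:
  assumes p: "p \<in> C"
    and qnn: "\<And>j e. j \<in> {1..M} \<Longrightarrow> e \<in> A j \<Longrightarrow> q j e \<ge> 0"
    and qsum: "\<And>j. j \<in> {1..M} \<Longrightarrow> (\<Sum>e\<in>A j. q j e) = f j"
    and supp: "\<And>j e. j \<in> {1..M} \<Longrightarrow> e \<in> A j \<Longrightarrow> p j e \<noteq> 0 \<Longrightarrow> q j e \<noteq> 0"
  shows "q \<in> C"
proof -
  let ?Sq = "Sv M A (\<lambda>i a. q i a *\<^sub>R v i a)" and ?Sp = "Sv M A (\<lambda>i a. p i a *\<^sub>R v i a)"
    and ?S = "Sv M A v"
  have s1: "span ?Sq \<subseteq> span ?S"
  proof (rule span_minimal[OF _ subspace_span])
    show "?Sq \<subseteq> span ?S"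
    proof
      fix y assume "y \<in> ?Sq"
      then obtain j e where y: "y = q j e *\<^sub>R v j e" "j \<in> {1..M}" "e \<in> A j" by (auto simp: Sv_def)
      have "v j e \<in> ?S" using y by (auto simp: Sv_def)
      thus "y \<in> span ?S" using y(1) by (simp add: span_base span_scale)
    qed
  qed
  have s2: "span ?Sp \<subseteq> span ?Sq"
  proof (rule span_minimal[OF _ subspace_span])
    show "?Sp \<subseteq> span ?Sq"
    proof
      fix y assume "y \<in> ?Sp"
      then obtain j e where y: "y = p j e *\<^sub>R v j e" "j \<in> {1..M}" "e \<in> A j" by (auto simp: Sv_def)
      show "y \<in> span ?Sq"
      proof (cases "p j e = 0")
        case True thus ?thesis using y by (simp add: span_zero)
      next
        case False
        hence qn: "q j e \<noteq> 0" using supp y by blast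
        have "q j e *\<^sub>R v j e \<in> ?Sq" using y by (auto simp: Sv_def)
        hence "(p j e / q j e) *\<^sub>R (q j e *\<^sub>R v j e) \<in> span ?Sq" by (rule span_scale[OF span_base])
        moreover have "(p j e / q j e) *\<^sub>R (q j e *\<^sub>R v j e) = y" using qn y(1) by simp
        ultimately show ?thesis by simp
      qed
    qed
  qed
  have "span ?Sq = span ?S" using s1 s2 C_span[OF p] by blast
  hence "dim ?Sq = dim ?S" using dim_span[of ?Sq] dim_span[of ?S] by simp
  hence "famrank M A (\<lambda>i a. q i a *\<^sub>R v i a) = famrank M A v" by (simp add: famrank_def Sv_def)
  thus ?thesis using qnn qsum by (auto simp: Cbar_def)
qed

lemma shift_C:
  assumes p: "p \<in> C" and i: "i \<in> {1..M}" and a: "a \<in> A i" and b: "b \<in> A i" and ab: "a \<noteq> b"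
    and t: "0 < t" "t < p i a"
  shows "shift p i a b t \<in> C"
proof (rule support_C[OF p])
  fix j e assume j: "j \<in> {1..M}" and e: "e \<in> A j"
  show "shift p i a b t j e \<ge> 0" using C_nonneg[OF p j e] t ab by (auto simp: shift_def)
  show "p j e \<noteq> 0 \<Longrightarrow> shift p i a b t j e \<noteq> 0"
    using C_nonneg[OF p j e] t ab by (auto simp: shift_def)
next
  fix j assume j: "j \<in> {1..M}"
  have fin: "finite (A j)" using finA[OF j] .
  have "(\<Sum>e\<in>A j. shift p i a b t j e) = (\<Sum>e\<in>A j. p j e) + (\<Sum>e\<in>A j. (if j = i \<and> e = b then t else 0))
      - (\<Sum>e\<in>A j. (if j = i \<and> e = a then t else 0))"
    unfolding shift_def by (simp add: sum.distrib sum_subtractf)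
  also have "(\<Sum>e\<in>A j. (if j = i \<and> e = b then t else 0)) = (if j = i then t else 0)"
    using fin b by (cases "j = i") (auto simp: sum.delta')
  also have "(\<Sum>e\<in>A j. (if j = i \<and> e = a then t else 0)) = (if j = i then t else 0)"
    using fin a by (cases "j = i") (auto simp: sum.delta')
  finally show "(\<Sum>e\<in>A j. shift p i a b t j e) = f j" using C_sum[OF p j] by simp
qed

lemma design_shift:
  assumes i: "i \<in> {1..M}" and a: "a \<in> A i" and b: "b \<in> A i"
  shows "V (shift p i a b t) = V p + t *\<^sub>R outer (v i b) - t *\<^sub>R outer (v i a)"
proof -
  have fin: "\<And>j. j \<in> {1..M} \<Longrightarrow> finite (A j)" by (rule finA)
  have dl: "(\<Sum>j\<in>{1..M}. \<Sum>e\<in>A j. (if j = i \<and> e = c then t else 0) *\<^sub>R outer (v j e)) = t *\<^sub>R outer (v i c)"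
    if c: "c \<in> A i" for c
  proof -
    have "(\<Sum>e\<in>A j. (if j = i \<and> e = c then t else 0) *\<^sub>R outer (v j e)) = (if j = i then t *\<^sub>R outer (v i c) else 0)"
      if j: "j \<in> {1..M}" for j
      using fin[OF j] c by (cases "j = i") (auto simp: if_scaleR0 sum.delta')
    hence "(\<Sum>j\<in>{1..M}. \<Sum>e\<in>A j. (if j = i \<and> e = c then t else 0) *\<^sub>R outer (v j e))
        = (\<Sum>j\<in>{1..M}. (if j = i then t *\<^sub>R outer (v i c) else 0))" by (intro sum.cong) auto
    also have "\<dots> = t *\<^sub>R outer (v i c)" using i by (simp add: sum.delta')
    finally show ?thesis .
  qed
  have "V (shift p i a b t) = (\<Sum>j\<in>{1..M}. \<Sum>e\<in>A j. p j e *\<^sub>R outer (v j e)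
       + (if j = i \<and> e = b then t else 0) *\<^sub>R outer (v j e) - (if j = i \<and> e = a then t else 0) *\<^sub>R outer (v j e))"
    unfolding design_def shift_def by (simp add: scaleR_add_left scaleR_diff_left)
  also have "\<dots> = V p + (\<Sum>j\<in>{1..M}. \<Sum>e\<in>A j. (if j = i \<and> e = b then t else 0) *\<^sub>R outer (v j e))
       - (\<Sum>j\<in>{1..M}. \<Sum>e\<in>A j. (if j = i \<and> e = a then t else 0) *\<^sub>R outer (v j e))"
    unfolding design_def by (simp add: sum.distrib sum_subtractf)
  finally show ?thesis using dl[OF a] dl[OF b] by simp
qed

lemma W1:
  assumes P: "orthogonal_matrix P" and Q: "orthogonal_matrix Q" and dpos: "\<And>k. d k > 0"
  shows "(Rm P d *v column k Q) \<bullet> ((P ** diagm d ** transpose P) *v (Rm P d *v column k Q)) = 1"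
proof -
  let ?R = "Rm P d" and ?M = "P ** diagm d ** transpose P"
  have "(?R *v column k Q) \<bullet> (?M *v (?R *v column k Q)) = column k Q \<bullet> (?R *v (?M *v (?R *v column k Q)))"
    by (rule Rm_dot)
  also have "\<dots> = column k Q \<bullet> ((?R ** ?M ** ?R) *v column k Q)"
    by (simp only: matrix_vector_mul_assoc matrix_mul_assoc)
  also have "\<dots> = 1" using Rm_id[OF P dpos] col_dot[OF Q] by simp
  finally show ?thesis .
qed

lemma pert_ineq:
  assumes p0: "p0 \<in> C" and q: "q \<in> C" and i: "i \<in> {1..M}" and a: "a \<in> A i" and b: "b \<in> A i"
    and Vq: "V q = V p0 + t *\<^sub>R outer (v i b) - t *\<^sub>R outer (v i a)"
    and t: "t > 0" "t * gv p0 (v i a) \<le> 1/2" "t * gv p0 (v i b) \<le> 1"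
  shows "pdet (V p0) * exp (t * (gv p0 (v i b) - gv p0 (v i a))
           - 2 * t^2 * ((gv p0 (v i a))^2 + (gv p0 (v i b))^2)) \<le> pdet (V q)"
proof -
  obtain P l where d0: "dec p0 P l" using dec_ex by blast
  obtain P' l' where d1: "dec q P' l'" using dec_ex by blast
  note b0 = dec_basic[OF p0 d0] and b1 = dec_basic[OF q d1]
  have P: "orthogonal_matrix P" and P': "orthogonal_matrix P'" using b0 b1 by auto
  let ?Z = "{k. l k \<noteq> 0}" and ?Z' = "{k. l' k \<noteq> 0}"
  have cc: "card (- ?Z) = card (- ?Z')" using b0(5) b1(5) by (simp add: card_compl)
  define ga where "ga = gv p0 (v i a)"
  define gb where "gb = gv p0 (v i b)"
  define K where "K = ga^2 + gb^2"
  have ga0: "ga \<ge> 0" and gb0: "gb \<ge> 0" unfolding ga_def gb_def using gv_nonneg[OF p0] by auto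
  define hb where "hb e = (\<Sum>k\<in>?Z. (column k P \<bullet> v i b)^2 / (l k + e))" for e
  define ha where "ha e = (\<Sum>k\<in>?Z. (column k P \<bullet> v i a)^2 / (l k + e))" for e
  define T where "T e = t * (hb e - ha e) - 2 * t^2 * K" for e
  have ineq: "(\<Prod>k\<in>?Z. l k + e) * exp (T e) \<le> (\<Prod>k\<in>?Z'. l' k + e)" if e: "e > 0" for e
  proof -
    define d where "d k = l k + e" for k
    have dpos: "d k > 0" for k using b0(3)[of k] e by (simp add: d_def)
    let ?X = "V q + e *\<^sub>R mat 1"
    have Xe: "?X = P' ** diagm (\<lambda>k. l' k + e) ** transpose P'"
      using b1(2) sp_add_eps[OF P'] by simp
    have Xs: "transpose ?X = ?X" unfolding Xe by (rule sp_transpose)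
    obtain Q \<mu> where H: "orthogonal_matrix Q \<and> det ?X = (\<Prod>k\<in>UNIV. d k) * (\<Prod>k\<in>UNIV. \<mu> k)
       \<and> (\<forall>k. \<mu> k = (Rm P d *v column k Q) \<bullet> (?X *v (Rm P d *v column k Q)))"
      using ratio_ex[where d=d, OF P dpos Xs] by blast
    have Q: "orthogonal_matrix Q" and dX: "det ?X = (\<Prod>k\<in>UNIV. d k) * (\<Prod>k\<in>UNIV. \<mu> k)"
      and mu: "\<And>k. \<mu> k = (Rm P d *v column k Q) \<bullet> (?X *v (Rm P d *v column k Q))"
      using H by auto
    define w where "w k = Rm P d *v column k Q" for k
    define s where "s k = (w k \<bullet> v i b)^2" for k
    define r where "r k = (w k \<bullet> v i a)^2" for k
    define x where "x k = t * (s k - r k)" for k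
    have dd: "d = (\<lambda>k. l k + e)" by (simp add: d_def fun_eq_iff)
    have M0: "V p0 + e *\<^sub>R mat 1 = P ** diagm d ** transpose P"
      using b0(2) sp_add_eps[OF P] by (simp add: dd)
    have Xsplit: "?X = (V p0 + e *\<^sub>R mat 1) + t *\<^sub>R outer (v i b) - t *\<^sub>R outer (v i a)"
      using Vq by (simp add: algebra_simps)
    have mux: "\<mu> k = 1 + x k" for k
    proof -
      have "?X *v w k = (V p0 + e *\<^sub>R mat 1) *v w k + t *\<^sub>R ((v i b \<bullet> w k) *\<^sub>R v i b)
            - t *\<^sub>R ((v i a \<bullet> w k) *\<^sub>R v i a)"
        unfolding Xsplit by (simp add: matrix_vector_mult_add_rdistrib matrix_vector_mult_diff_rdistrib
            scaleR_matrix_vector_assoc[symmetric] outer_mulv)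
      hence "\<mu> k = w k \<bullet> ((V p0 + e *\<^sub>R mat 1) *v w k) + t * ((v i b \<bullet> w k) * (w k \<bullet> v i b))
            - t * ((v i a \<bullet> w k) * (w k \<bullet> v i a))"
        unfolding mu w_def[symmetric] by (simp add: inner_add_right inner_diff_right)
      also have "w k \<bullet> ((V p0 + e *\<^sub>R mat 1) *v w k) = 1"
        unfolding M0 w_def by (rule W1[OF P Q dpos])
      finally show ?thesis unfolding x_def s_def r_def by (simp add: inner_commute power2_eq_square algebra_simps)
    qed
    have sums: "(\<Sum>k\<in>UNIV. s k) = hb e" "(\<Sum>k\<in>UNIV. r k) = ha e"
    proof -
      show "(\<Sum>k\<in>UNIV. s k) = hb e"
        unfolding s_def w_def sum_wv[OF P Q dpos] hb_def d_def by (rule h_Z[OF p0 d0 i b])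
      show "(\<Sum>k\<in>UNIV. r k) = ha e"
        unfolding r_def w_def sum_wv[OF P Q dpos] ha_def d_def by (rule h_Z[OF p0 d0 i a])
    qed
    have hbg: "hb e \<le> gb" and hag: "ha e \<le> ga"
      unfolding hb_def ha_def gb_def ga_def using h_le_g[OF p0 d0 e] by auto
    have s0: "s k \<ge> 0" and r0: "r k \<ge> 0" for k by (auto simp: s_def r_def)
    have sle: "s k \<le> gb" for k
    proof -
      have "s k \<le> (\<Sum>k\<in>UNIV. s k)" by (rule member_le_sum) (auto simp: s0)
      thus ?thesis using sums hbg by simp
    qed
    have rle: "r k \<le> ga" for k
    proof -
      have "r k \<le> (\<Sum>k\<in>UNIV. r k)" by (rule member_le_sum) (auto simp: r0)
      thus ?thesis using sums hag by simp
    qed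
    have xlo: "-1/2 \<le> x k" for k
    proof -
      have "t * r k \<le> t * ga" using rle[of k] t(1) by (simp add: mult_left_mono)
      hence "t * r k \<le> 1/2" using t(2) ga_def by simp
      moreover have "t * s k \<ge> 0" using s0[of k] t(1) by simp
      ultimately show ?thesis unfolding x_def by (simp add: right_diff_distrib)
    qed
    have xhi: "x k \<le> 1" for k
    proof -
      have "t * s k \<le> t * gb" using sle[of k] t(1) by (simp add: mult_left_mono)
      hence "t * s k \<le> 1" using t(3) gb_def by simp
      moreover have "t * r k \<ge> 0" using r0[of k] t(1) by simp
      ultimately show ?thesis unfolding x_def by (simp add: right_diff_distrib)
    qed
    have x2: "(x k)^2 \<le> t^2 * (gb * s k + ga * r k)" for k
    proof -
      have "(s k - r k)^2 \<le> (s k)^2 + (r k)^2" using s0[of k] r0[of k] by (simp add: power2_diff)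
      also have "\<dots> \<le> gb * s k + ga * r k"
        using s0[of k] r0[of k] sle[of k] rle[of k]
        by (intro add_mono) (simp_all add: power2_eq_square mult_right_mono)
      finally have "(s k - r k)^2 \<le> gb * s k + ga * r k" .
      hence "t^2 * (s k - r k)^2 \<le> t^2 * (gb * s k + ga * r k)" by (simp add: mult_left_mono)
      thus ?thesis unfolding x_def by (simp add: power_mult_distrib)
    qed
    have sx2: "(\<Sum>k\<in>UNIV. (x k)^2) \<le> t^2 * K"
    proof -
      have "(\<Sum>k\<in>UNIV. (x k)^2) \<le> (\<Sum>k\<in>UNIV. t^2 * (gb * s k + ga * r k))" by (rule sum_mono) (rule x2)
      also have "\<dots> = t^2 * (gb * (\<Sum>k\<in>UNIV. s k) + ga * (\<Sum>k\<in>UNIV. r k))"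
        by (simp add: sum_distrib_left[symmetric] sum.distrib)
      also have "\<dots> \<le> t^2 * (gb * gb + ga * ga)"
        using sums hbg hag ga0 gb0 by (intro mult_left_mono add_mono) (simp_all add: mult_left_mono)
      finally show ?thesis by (simp add: K_def power2_eq_square algebra_simps)
    qed
    have sx: "(\<Sum>k\<in>UNIV. x k) = t * (hb e - ha e)"
      unfolding x_def by (simp add: sum_distrib_left[symmetric] sum_subtractf sums)
    have "exp (T e) \<le> exp ((\<Sum>k\<in>UNIV. x k) - 2 * (\<Sum>k\<in>UNIV. (x k)^2))"
      unfolding T_def sx using sx2 by simp
    also have "\<dots> = (\<Prod>k\<in>UNIV. exp (x k - 2 * (x k)^2))"
      by (simp add: exp_sum[symmetric] sum_subtractf sum_distrib_left)
    also have "\<dots> \<le> (\<Prod>k\<in>UNIV. \<mu> k)"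
      by (rule prod_mono) (simp add: mux exp_lower[OF xlo xhi] less_imp_le)
    finally have emu: "exp (T e) \<le> (\<Prod>k\<in>UNIV. \<mu> k)" .
    have "(\<Prod>k\<in>UNIV. l k + e) * exp (T e) \<le> (\<Prod>k\<in>UNIV. d k) * (\<Prod>k\<in>UNIV. \<mu> k)"
      unfolding d_def[symmetric] by (rule mult_left_mono[OF emu]) (use dpos in \<open>auto intro: prod_nonneg less_imp_le\<close>)
    also have "\<dots> = (\<Prod>k\<in>UNIV. l' k + e)" using dX unfolding Xe by (simp add: sp_det[OF P'])
    finally have "(\<Prod>k\<in>UNIV. l k + e) * exp (T e) \<le> (\<Prod>k\<in>UNIV. l' k + e)" .
    hence "((\<Prod>k\<in>?Z. l k + e) * exp (T e)) * e ^ card (- ?Z) \<le> (\<Prod>k\<in>?Z'. l' k + e) * e ^ card (- ?Z)"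
      unfolding prod_split[of l e] prod_split[of l' e] cc by (simp add: mult_ac)
    moreover have "e ^ card (- ?Z) > 0" using e by simp
    ultimately show ?thesis by simp
  qed
  define T0 where "T0 = t * ((\<Sum>k\<in>?Z. (column k P \<bullet> v i b)^2 / (l k + 0)) - (\<Sum>k\<in>?Z. (column k P \<bullet> v i a)^2 / (l k + 0))) - 2 * t^2 * K"
  have limT: "(T \<longlongrightarrow> T0) (at_right 0)"
    unfolding T_def T0_def hb_def ha_def using b0(4) by (intro tendsto_intros) auto
  have limL: "((\<lambda>e. (\<Prod>k\<in>?Z. l k + e) * exp (T e)) \<longlongrightarrow> (\<Prod>k\<in>?Z. l k + 0) * exp T0) (at_right 0)"
    by (intro tendsto_intros limT)
  have limR: "((\<lambda>e. \<Prod>k\<in>?Z'. l' k + e) \<longlongrightarrow> (\<Prod>k\<in>?Z'. l' k + 0)) (at_right 0)"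
    by (intro tendsto_intros)
  have le: "(\<Prod>k\<in>?Z. l k + 0) * exp T0 \<le> (\<Prod>k\<in>?Z'. l' k + 0)"
    by (rule lim_le[OF ineq limL limR])
  have T0e: "T0 = t * (gb - ga) - 2 * t^2 * K"
    unfolding T0_def ga_def gb_def by (simp add: dec_gv[OF d0])
  show ?thesis using le unfolding T0e b0(6) b1(6) K_def ga_def gb_def by simp
qed

lemma first_order:
  assumes p0: "p0 \<in> C" and mx: "\<forall>p\<in>C. Fbar M A v p \<le> Fbar M A v p0"
    and i: "i \<in> {1..M}" and a: "a \<in> A i" and b: "b \<in> A i" and pa: "p0 i a > 0"
  shows "gv p0 (v i b) \<le> gv p0 (v i a)"
proof (rule ccontr)
  define ga where "ga = gv p0 (v i a)"
  define gb where "gb = gv p0 (v i b)"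
  assume "\<not> gv p0 (v i b) \<le> gv p0 (v i a)"
  hence lt: "ga < gb" by (simp add: ga_def gb_def)
  hence ab: "a \<noteq> b" by (auto simp: ga_def gb_def)
  have ga0: "ga \<ge> 0" and gb0: "gb \<ge> 0" unfolding ga_def gb_def using gv_nonneg[OF p0] by auto
  define K where "K = ga^2 + gb^2"
  have K0: "K \<ge> 0" by (simp add: K_def)
  define c where "c = gb - ga"
  have c0: "c > 0" using lt by (simp add: c_def)
  define t where "t = min (p0 i a / 2) (min (1 / (2 * (ga + gb) + 2)) (c / (4 * K + 4)))"
  have t0: "t > 0" unfolding t_def using pa ga0 gb0 c0 K0 by auto
  have t1: "t < p0 i a" unfolding t_def using pa by linarith
  have t2: "t \<le> 1 / (2 * (ga + gb) + 2)" unfolding t_def by linarith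
  have t3: "t \<le> c / (4 * K + 4)" unfolding t_def by linarith
  have tt2: "t * (2 * (ga + gb) + 2) \<le> 1" using t2 ga0 gb0 by (simp add: field_simps)
  have tsum: "t * ga + t * gb + t \<le> 1/2" using tt2 by (simp add: algebra_simps)
  have "t * ga \<ge> 0" "t * gb \<ge> 0" using t0 ga0 gb0 by auto
  hence tga: "t * ga \<le> 1/2" and tgb: "t * gb \<le> 1" using tsum t0 by linarith+
  have tt3: "t * (4 * K + 4) \<le> c" using t3 K0 by (simp add: field_simps)
  have "t * K \<ge> 0" using t0 K0 by simp
  hence "2 * t * K < c" using tt3 t0 by (simp add: algebra_simps)
  hence pos: "t * c - 2 * t^2 * K > 0"
  proof -
    assume "2 * t * K < c"
    hence "c - 2 * t * K > 0" by simp
    hence "t * (c - 2 * t * K) > 0" using t0 by simp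
    thus ?thesis by (simp add: algebra_simps power2_eq_square)
  qed
  define q where "q = shift p0 i a b t"
  have q: "q \<in> C" unfolding q_def by (rule shift_C[OF p0 i a b ab t0 t1])
  have Vq: "V q = V p0 + t *\<^sub>R outer (v i b) - t *\<^sub>R outer (v i a)"
    unfolding q_def by (rule design_shift[OF i a b])
  have "pdet (V p0) * exp (t * (gb - ga) - 2 * t^2 * K) \<le> pdet (V q)"
    using pert_ineq[OF p0 q i a b Vq t0] tga tgb unfolding ga_def gb_def K_def by simp
  moreover have "exp (t * (gb - ga) - 2 * t^2 * K) > 1" using pos by (simp add: c_def)
  moreover have "pdet (V p0) > 0" by (rule pdet_pos[OF p0])
  ultimately have "pdet (V p0) < pdet (V q)"
  proof -
    assume h1: "pdet (V p0) * exp (t * (gb - ga) - 2 * t^2 * K) \<le> pdet (V q)"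
      and h2: "exp (t * (gb - ga) - 2 * t^2 * K) > 1" and h3: "pdet (V p0) > 0"
    have "pdet (V p0) * 1 < pdet (V p0) * exp (t * (gb - ga) - 2 * t^2 * K)"
      using h2 h3 by (rule mult_strict_left_mono)
    thus ?thesis using h1 by simp
  qed
  hence "Fbar M A v p0 < Fbar M A v q"
    using pdet_pos[OF p0] by (simp add: Fbar_def)
  thus False using mx q by force
qed

end

lemma det_kernel:
  fixes N :: "real^'n^'n"
  assumes "det N \<noteq> 0" "N *v x = 0"
  shows "x = 0"
proof -
  have "\<not> rank N < CARD('n)" using assms(1) det_eq_0_rank by blast
  moreover have "rank N \<le> CARD('n)" using rank_bound[of N] by simp
  ultimately have "rank N = CARD('n)" by simp
  hence "inj ((*v) N)" using full_rank_injective by blast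
  moreover have "N *v x = N *v 0" using assms(2) by simp
  ultimately show ?thesis by (meson injD)
qed

lemma eig_to_sp:
  fixes N P :: "real^'n^'n"
  assumes P: "orthogonal_matrix P" and e: "\<And>k. N *v column k P = m k *\<^sub>R column k P"
  shows "N = P ** diagm m ** transpose P"
  unfolding matrix_eq
proof
  fix y
  have "N *v y = N *v (\<Sum>k\<in>UNIV. (column k P \<bullet> y) *\<^sub>R column k P)"
    using sp_expand[OF P, of y] by simp
  also have "\<dots> = (\<Sum>k\<in>UNIV. (m k * (column k P \<bullet> y)) *\<^sub>R column k P)"
    by (simp add: vec.sum matrix_vector_mult_scaleR e mult.commute)
  also have "\<dots> = (P ** diagm m ** transpose P) *v y" by (simp add: sp_mulv)
  finally show "N *v y = (P ** diagm m ** transpose P) *v y" .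
qed

lemma compact_Pi_UNIV:
  assumes "\<And>i. compact (S i)"
  shows "compact (Pi UNIV S :: ('i \<Rightarrow> 'b::topological_space) set)"
proof -
  have "compactin (product_topology (\<lambda>i. euclidean) UNIV) (PiE UNIV S)"
    by (simp add: compactin_PiE compactin_euclidean_iff assms)
  thus ?thesis by (simp add: euclidean_product_topology PiE_UNIV_domain compactin_euclidean_iff)
qed

lemma cont_coord: "continuous_on UNIV (\<lambda>p::nat \<Rightarrow> 'a \<Rightarrow> real. p j e)"
  by (rule continuous_on_compose2[OF continuous_on_product_coordinates continuous_on_product_coordinates]) auto

lemma Ventry: "(design M A v p) $ r $ s = (\<Sum>j\<in>{1..M}. \<Sum>e\<in>A j. p j e * (v j e $ r * v j e $ s))"
  by (simp add: design_def outer_def sum_component)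

context setting begin

lemma dec_span:
  assumes p: "p \<in> C" and d: "dec p P l"
  shows "span ((\<lambda>k. column k P) ` {k. l k \<noteq> 0}) = span (Sv M A v)"
proof -
  have P: "orthogonal_matrix P" and Vp: "V p = P ** diagm l ** transpose P" using d by (auto simp: dec_def)
  let ?Sp = "Sv M A (\<lambda>i a. p i a *\<^sub>R v i a)" and ?CZ = "(\<lambda>k. column k P) ` {k. l k \<noteq> 0}"
  have "span ?Sp \<subseteq> span ?CZ"
  proof (rule span_minimal[OF _ subspace_span], clarify)
    fix y assume "y \<in> ?Sp"
    then obtain j b where y: "y = p j b *\<^sub>R v j b" "j \<in> {1..M}" "b \<in> A j" by (auto simp: Sv_def)
    have "y = (\<Sum>k\<in>UNIV. (column k P \<bullet> y) *\<^sub>R column k P)" by (rule sp_expand[OF P])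
    also have "\<dots> \<in> span ?CZ"
    proof (rule span_sum)
      fix k
      show "(column k P \<bullet> y) *\<^sub>R column k P \<in> span ?CZ"
      proof (cases "l k = 0")
        case True
        hence "column k P \<bullet> y = 0" using dec_zero[OF p d True y(2,3)] y(1) by (simp add: inner_commute)
        thus ?thesis by (simp add: span_zero)
      next
        case False thus ?thesis by (auto intro: span_scale span_base)
      qed
    qed
    finally show "y \<in> span ?CZ" .
  qed
  moreover have "span ?CZ \<subseteq> span ?Sp"
  proof -
    have "span ?CZ = range ((*v) (V p))" using sp_range[OF P] Vp by simp
    also have "\<dots> \<subseteq> span ?Sp"
    proof clarify
      fix y
      have "V p *v y = (\<Sum>j\<in>{1..M}. \<Sum>a\<in>A j. (v j a \<bullet> y) *\<^sub>R (p j a *\<^sub>R v j a))"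
        by (simp add: design_mulv mult.commute)
      also have "\<dots> \<in> span ?Sp"
      proof (intro span_sum)
        fix j a assume "j \<in> {1..M}" "a \<in> A j"
        from Sv_mem[where w="\<lambda>i a. p i a *\<^sub>R v i a" and M=M and A=A, OF this]
        show "(v j a \<bullet> y) *\<^sub>R (p j a *\<^sub>R v j a) \<in> span ?Sp"
          by (intro span_scale span_base) simp
      qed
      finally show "V p *v y \<in> span ?Sp" .
    qed
    finally show ?thesis .
  qed
  ultimately have "span ?Sp = span ?CZ" by blast
  thus ?thesis using C_span[OF p] by simp
qed

lemma dec_col_in:
  assumes p: "p \<in> C" and d: "dec p P l" and lk: "l k \<noteq> 0"
  shows "column k P \<in> span (Sv M A v)"
  using dec_span[OF p d] lk by (metis (mono_tags, lifting) image_eqI mem_Collect_eq span_base)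

lemma dec_col_orth:
  assumes p: "p \<in> C" and d: "dec p P l" and lk: "l k = 0" and y: "y \<in> span (Sv M A v)"
  shows "column k P \<bullet> y = 0"
proof -
  have "orthogonal (column k P) z" if "z \<in> Sv M A v" for z
  proof -
    from that obtain i a where z: "z = v i a" "i \<in> {1..M}" "a \<in> A i" by (auto simp: Sv_def)
    show ?thesis using dec_zero[OF p d lk z(2,3)] z(1) by (simp add: orthogonal_def inner_commute)
  qed
  hence "orthogonal (column k P) y" using orthogonal_to_span[OF y] by blast
  thus ?thesis by (simp add: orthogonal_def)
qed

definition trunc :: "(nat \<Rightarrow> 'a \<Rightarrow> real) \<Rightarrow> nat \<Rightarrow> 'a \<Rightarrow> real" where
  "trunc p = (\<lambda>j e. if j \<in> {1..M} \<and> e \<in> A j then p j e else 0)"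

lemma V_trunc: "V (trunc p) = V p"
  unfolding design_def trunc_def by (intro sum.cong refl) auto

lemma famrank_trunc: "famrank M A (\<lambda>i a. trunc p i a *\<^sub>R v i a) = famrank M A (\<lambda>i a. p i a *\<^sub>R v i a)"
proof -
  have "{trunc p i a *\<^sub>R v i a |i a. i \<in> {1..M} \<and> a \<in> A i} = {p i a *\<^sub>R v i a |i a. i \<in> {1..M} \<and> a \<in> A i}"
    unfolding trunc_def by force
  thus ?thesis by (simp add: famrank_def)
qed

lemma trunc_C: "p \<in> C \<Longrightarrow> trunc p \<in> C"
  using famrank_trunc[of p] unfolding Cbar_def by (auto simp: trunc_def)

lemma exists_max:
  assumes p1: "p1 \<in> C"
  shows "\<exists>p0\<in>C. \<forall>p\<in>C. Fbar M A v p \<le> Fbar M A v p0"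
proof -
  obtain P0 l0 where d1: "dec p1 P0 l0" using dec_ex by blast
  have P0: "orthogonal_matrix P0" using d1 by (auto simp: dec_def)
  define Pp where "Pp = P0 ** diagm (\<lambda>k. if l0 k = 0 then 1 else 0) ** transpose P0"
  define Phi where "Phi p = det (V p + Pp)" for p
  have Pp_mulv: "Pp *v y = (\<Sum>k\<in>UNIV. ((if l0 k = 0 then 1 else 0) * (column k P0 \<bullet> y)) *\<^sub>R column k P0)" for y
    unfolding Pp_def by (rule sp_mulv)
  have Pp_S: "Pp *v y = 0" if y: "y \<in> span (Sv M A v)" for y
    unfolding Pp_mulv using dec_col_orth[OF p1 d1 _ y] by (intro sum.neutral) auto
  have Pp_perp: "Pp *v y = y" if y: "\<And>z. z \<in> span (Sv M A v) \<Longrightarrow> z \<bullet> y = 0" for y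
  proof -
    have "Pp *v y = (\<Sum>k\<in>UNIV. (column k P0 \<bullet> y) *\<^sub>R column k P0)"
      unfolding Pp_mulv
    proof (intro sum.cong refl)
      fix k
      show "((if l0 k = 0 then 1 else 0) * (column k P0 \<bullet> y)) *\<^sub>R column k P0 = (column k P0 \<bullet> y) *\<^sub>R column k P0"
        using y[OF dec_col_in[OF p1 d1, of k]] by auto
    qed
    also have "\<dots> = y" using sp_expand[OF P0, of y] by simp
    finally show ?thesis .
  qed
  have K1: "Phi p = pdet (V p)" if p: "p \<in> C" for p
  proof -
    obtain P l where d: "dec p P l" using dec_ex by blast
    have P: "orthogonal_matrix P" and Vp: "V p = P ** diagm l ** transpose P" using d by (auto simp: dec_def)
    define m where "m k = (if l k = 0 then 1 else l k)" for k
    have "(V p + Pp) *v column k P = m k *\<^sub>R column k P" for k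
    proof (cases "l k = 0")
      case True
      have "Pp *v column k P = column k P"
      proof (rule Pp_perp)
        fix z assume z: "z \<in> span (Sv M A v)"
        have "column k P \<bullet> z = 0" by (rule dec_col_orth[OF p d True z])
        thus "z \<bullet> column k P = 0" by (simp add: inner_commute)
      qed
      thus ?thesis using True by (simp add: matrix_vector_mult_add_rdistrib Vp sp_eig[OF P] m_def)
    next
      case False
      have "Pp *v column k P = 0" by (rule Pp_S[OF dec_col_in[OF p d False]])
      thus ?thesis using False by (simp add: matrix_vector_mult_add_rdistrib Vp sp_eig[OF P] m_def)
    qed
    hence "V p + Pp = P ** diagm m ** transpose P" by (rule eig_to_sp[OF P])
    hence "Phi p = (\<Prod>k\<in>UNIV. m k)" by (simp add: Phi_def sp_det[OF P])
    also have "\<dots> = (\<Prod>k\<in>{k. l k \<noteq> 0}. m k) * (\<Prod>k\<in>-{k. l k \<noteq> 0}. m k)" by (rule prod_split_Z)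
    also have "(\<Prod>k\<in>-{k. l k \<noteq> 0}. m k) = 1" by (intro prod.neutral) (auto simp: m_def)
    also have "(\<Prod>k\<in>{k. l k \<noteq> 0}. m k) = (\<Prod>k\<in>{k. l k \<noteq> 0}. l k)" by (intro prod.cong) (auto simp: m_def)
    finally show ?thesis using dec_pdet[OF d] by simp
  qed
  have K2: "p \<in> C" if nn: "\<And>j e. j \<in> {1..M} \<Longrightarrow> e \<in> A j \<Longrightarrow> p j e \<ge> 0"
    and sm: "\<And>j. j \<in> {1..M} \<Longrightarrow> (\<Sum>e\<in>A j. p j e) = f j" and ph: "Phi p \<noteq> 0" for p
  proof -
    let ?Sp = "Sv M A (\<lambda>i a. p i a *\<^sub>R v i a)" and ?S = "Sv M A v"
    have sub: "span ?Sp \<subseteq> span ?S"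
    proof (rule span_minimal[OF _ subspace_span])
      show "?Sp \<subseteq> span ?S"
      proof
        fix y assume "y \<in> ?Sp"
        then obtain j e where y: "y = p j e *\<^sub>R v j e" "j \<in> {1..M}" "e \<in> A j" by (auto simp: Sv_def)
        have "v j e \<in> ?S" using y by (auto simp: Sv_def)
        thus "y \<in> span ?S" using y(1) by (simp add: span_base span_scale)
      qed
    qed
    have "span ?Sp = span ?S"
    proof (rule ccontr)
      assume "span ?Sp \<noteq> span ?S"
      hence "span ?Sp \<subset> span ?S" using sub by blast
      then obtain x where x: "x \<noteq> 0" "x \<in> span ?S" "\<And>y. y \<in> span ?Sp \<Longrightarrow> orthogonal x y"
        using orthogonal_to_subspace_exists_gen by blast
      have "V p *v x = (\<Sum>j\<in>{1..M}. \<Sum>a\<in>A j. (p j a * (v j a \<bullet> x)) *\<^sub>R v j a)" by (rule design_mulv)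
      also have "\<dots> = 0"
      proof (intro sum.neutral ballI)
        fix j a assume j: "j \<in> {1..M}" and a: "a \<in> A j"
        have "p j a *\<^sub>R v j a \<in> span ?Sp"
          by (rule span_base) (use j a in \<open>auto simp: Sv_def\<close>)
        hence "orthogonal x (p j a *\<^sub>R v j a)" by (rule x(3))
        hence "p j a * (v j a \<bullet> x) = 0" by (simp add: orthogonal_def inner_commute)
        thus "(p j a * (v j a \<bullet> x)) *\<^sub>R v j a = 0" by simp
      qed
      finally have "(V p + Pp) *v x = 0" using Pp_S[OF x(2)] by (simp add: matrix_vector_mult_add_rdistrib)
      hence "x = 0" using det_kernel ph by (auto simp: Phi_def)
      thus False using x(1) by simp
    qed
    hence "dim ?Sp = dim ?S" using dim_span[of ?Sp] dim_span[of ?S] by simp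
    hence "famrank M A (\<lambda>i a. p i a *\<^sub>R v i a) = famrank M A v" by (simp add: famrank_def Sv_def)
    thus ?thesis using nn sm by (auto simp: Cbar_def)
  qed
  define c where "c j e = (if j \<in> {1..M} \<and> e \<in> A j then f j else 0)" for j e
  define K where "K = Pi UNIV (\<lambda>j. Pi UNIV (\<lambda>e. {0..c j e}))"
  define K' where "K' = K \<inter> (\<Inter>j\<in>{1..M}. {p. (\<Sum>e\<in>A j. p j e) = f j})"
  have cK: "compact K" unfolding K_def by (intro compact_Pi_UNIV) auto
  have "closed (\<Inter>j\<in>{1..M}. {p::nat \<Rightarrow> 'a \<Rightarrow> real. (\<Sum>e\<in>A j. p j e) = f j})"
    by (intro closed_INT ballI closed_Collect_eq continuous_intros cont_coord)
  hence cK': "compact K'" unfolding K'_def using cK by (intro compact_Int_closed)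
  have contPhi: "continuous_on UNIV Phi"
    unfolding Phi_def det_def
    by (simp add: Ventry) (intro continuous_intros cont_coord)
  have tK: "trunc p \<in> K'" if p: "p \<in> C" for p
  proof -
    have "trunc p j e \<in> {0..c j e}" for j e
    proof (cases "j \<in> {1..M} \<and> e \<in> A j")
      case True
      hence je: "j \<in> {1..M}" "e \<in> A j" by auto
      have "p j e \<le> (\<Sum>e\<in>A j. p j e)"
        using C_nonneg[OF p je(1)] finA[OF je(1)] je(2) by (intro member_le_sum) auto
      thus ?thesis using True C_nonneg[OF p je] C_sum[OF p je(1)] by (simp add: trunc_def c_def)
    next
      case False thus ?thesis by (auto simp: trunc_def c_def)
    qed
    moreover have "(\<Sum>e\<in>A j. trunc p j e) = f j" if "j \<in> {1..M}" for j
      using C_sum[OF p that] that by (simp add: trunc_def)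
    ultimately show ?thesis unfolding K'_def K_def by auto
  qed
  have "K' \<noteq> {}" using tK[OF p1] by blast
  then obtain p0 where p0K: "p0 \<in> K'" and p0max: "\<And>q. q \<in> K' \<Longrightarrow> Phi q \<le> Phi p0"
    using continuous_attains_sup[OF cK' _ continuous_on_subset[OF contPhi]] by blast
  have "Phi (trunc p1) = pdet (V p1)" using K1[OF trunc_C[OF p1]] by (simp add: V_trunc)
  hence "Phi p0 > 0" using p0max[OF tK[OF p1]] pdet_pos[OF p1] by simp
  moreover have "\<And>j e. j \<in> {1..M} \<Longrightarrow> e \<in> A j \<Longrightarrow> p0 j e \<ge> 0"
  proof -
    fix j e
    have "p0 \<in> K" using p0K by (simp add: K'_def)
    hence "p0 j e \<in> {0..c j e}" unfolding K_def by (auto simp: Pi_iff)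
    thus "p0 j e \<ge> 0" by simp
  qed
  moreover have "\<And>j. j \<in> {1..M} \<Longrightarrow> (\<Sum>e\<in>A j. p0 j e) = f j"
    using p0K by (auto simp: K'_def)
  ultimately have p0C: "p0 \<in> C" using K2 by auto
  show ?thesis
  proof (intro bexI[OF _ p0C] ballI)
    fix p assume p: "p \<in> C"
    have "pdet (V p) = Phi (trunc p)" using K1[OF trunc_C[OF p]] by (simp add: V_trunc)
    also have "\<dots> \<le> Phi p0" by (rule p0max[OF tK[OF p]])
    also have "\<dots> = pdet (V p0)" by (rule K1[OF p0C])
    finally have "pdet (V p) \<le> pdet (V p0)" .
    thus "Fbar M A v p \<le> Fbar M A v p0" using pdet_pos[OF p] by (simp add: Fbar_def)
  qed
qed

end

context setting begin

lemma sum_le_G: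
  assumes p: "p \<in> C" and q: "q \<in> C"
  shows "(\<Sum>j\<in>{1..M}. \<Sum>a\<in>A j. q j a * gv p (v j a)) \<le> Gbar M A v f p"
proof -
  have "(\<Sum>j\<in>{1..M}. \<Sum>a\<in>A j. q j a * gv p (v j a)) \<le> (\<Sum>j\<in>{1..M}. f j * Max ((\<lambda>a. gv p (v j a)) ` A j))"
  proof (rule sum_mono)
    fix j assume j: "j \<in> {1..M}"
    have "(\<Sum>a\<in>A j. q j a * gv p (v j a)) \<le> (\<Sum>a\<in>A j. q j a * Max ((\<lambda>a. gv p (v j a)) ` A j))"
      using finA[OF j] C_nonneg[OF q j] by (intro sum_mono mult_left_mono) auto
    also have "\<dots> = f j * Max ((\<lambda>a. gv p (v j a)) ` A j)"
      using C_sum[OF q j] by (simp add: sum_distrib_right[symmetric])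
    finally show "(\<Sum>a\<in>A j. q j a * gv p (v j a)) \<le> f j * Max ((\<lambda>a. gv p (v j a)) ` A j)" .
  qed
  also have "\<dots> = Gbar M A v f p" by (simp add: Gbar_def gv_def)
  finally show ?thesis .
qed

lemma G_eq_of_max:
  assumes p0: "p0 \<in> C" and mx: "\<forall>p\<in>C. Fbar M A v p \<le> Fbar M A v p0"
  shows "Gbar M A v f p0 = real D"
proof -
  have "Gbar M A v f p0 = (\<Sum>j\<in>{1..M}. f j * Max ((\<lambda>a. gv p0 (v j a)) ` A j))"
    by (simp add: Gbar_def gv_def)
  also have "\<dots> = (\<Sum>j\<in>{1..M}. \<Sum>a\<in>A j. p0 j a * gv p0 (v j a))"
  proof (rule sum.cong[OF refl])
    fix j assume j: "j \<in> {1..M}"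
    let ?m = "Max ((\<lambda>a. gv p0 (v j a)) ` A j)"
    have fin: "finite (A j)" and ne: "A j \<noteq> {}" using finA[OF j] A_ne[OF p0 j] by auto
    have "p0 j a * gv p0 (v j a) = p0 j a * ?m" if a: "a \<in> A j" for a
    proof (cases "p0 j a = 0")
      case True thus ?thesis by simp
    next
      case False
      hence pa: "p0 j a > 0" using C_nonneg[OF p0 j a] by simp
      have "?m \<le> gv p0 (v j a)"
        using first_order[OF p0 mx j a _ pa] fin ne by (subst Max_le_iff) auto
      moreover have "gv p0 (v j a) \<le> ?m" using fin a by (intro Max_ge) auto
      ultimately show ?thesis by simp
    qed
    hence "(\<Sum>a\<in>A j. p0 j a * gv p0 (v j a)) = (\<Sum>a\<in>A j. p0 j a * ?m)" by (rule sum.cong[OF refl])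
    also have "\<dots> = f j * ?m" using C_sum[OF p0 j] by (simp add: sum_distrib_right[symmetric])
    finally show "f j * ?m = (\<Sum>a\<in>A j. p0 j a * gv p0 (v j a))" by simp
  qed
  also have "\<dots> = real D" by (rule sum_gv[OF p0])
  finally show ?thesis .
qed

lemma max_of_G_eq:
  assumes ps: "ps \<in> C" and G: "Gbar M A v f ps = real D"
  shows "\<forall>p\<in>C. Fbar M A v p \<le> Fbar M A v ps"
proof
  fix p assume p: "p \<in> C"
  have "pdet (V p) \<le> pdet (V ps) * exp ((\<Sum>j\<in>{1..M}. \<Sum>a\<in>A j. p j a * gv ps (v j a)) - real D)"
    by (rule concave[OF ps p])
  also have "\<dots> \<le> pdet (V ps) * exp 0"
    using sum_le_G[OF ps p] G pdet_pos[OF ps] by (intro mult_left_mono) auto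
  finally have "pdet (V p) \<le> pdet (V ps)" by simp
  thus "Fbar M A v p \<le> Fbar M A v ps" using pdet_pos[OF p] by (simp add: Fbar_def)
qed

lemma main:
  assumes ps: "ps \<in> C"
  shows "((\<forall>\<pi>\<in>C. Fbar M A v \<pi> \<le> Fbar M A v ps) \<longleftrightarrow> (\<forall>\<pi>\<in>C. Gbar M A v f ps \<le> Gbar M A v f \<pi>))
       \<and> ((\<forall>\<pi>\<in>C. Gbar M A v f ps \<le> Gbar M A v f \<pi>) \<longleftrightarrow> Gbar M A v f ps = real D)"
proof -
  obtain p0 where p0: "p0 \<in> C" and mx0: "\<forall>p\<in>C. Fbar M A v p \<le> Fbar M A v p0"
    using exists_max[OF ps] by blast
  have G0: "Gbar M A v f p0 = real D" by (rule G_eq_of_max[OF p0 mx0])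
  have e13: "(\<forall>\<pi>\<in>C. Fbar M A v \<pi> \<le> Fbar M A v ps) \<longleftrightarrow> Gbar M A v f ps = real D"
    using G_eq_of_max[OF ps] max_of_G_eq[OF ps] by blast
  have e23: "(\<forall>\<pi>\<in>C. Gbar M A v f ps \<le> Gbar M A v f \<pi>) \<longleftrightarrow> Gbar M A v f ps = real D"
  proof
    assume "\<forall>\<pi>\<in>C. Gbar M A v f ps \<le> Gbar M A v f \<pi>"
    hence "Gbar M A v f ps \<le> real D" using p0 G0 by force
    thus "Gbar M A v f ps = real D" using G_ge[OF ps] by simp
  next
    assume "Gbar M A v f ps = real D"
    thus "\<forall>\<pi>\<in>C. Gbar M A v f ps \<le> Gbar M A v f \<pi>" using G_ge by simp
  qed
  show ?thesis using e13 e23 by blast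
qed

end

theorem lemma7:
  fixes M :: nat and A :: "nat \<Rightarrow> 'a set" and v :: "nat \<Rightarrow> 'a \<Rightarrow> real^'n"
    and f :: "nat \<Rightarrow> real" and \<pi>s :: "nat \<Rightarrow> 'a \<Rightarrow> real"
  assumes finA: "\<And>i. i \<in> {1..M} \<Longrightarrow> finite (A i)"
    and fpos: "\<And>i. i \<in> {1..M} \<Longrightarrow> f i > 0"
    and mem: "\<pi>s \<in> Cbar M A v f"
  shows "((\<forall>\<pi>\<in>Cbar M A v f. Fbar M A v \<pi> \<le> Fbar M A v \<pi>s)
           \<longleftrightarrow> (\<forall>\<pi>\<in>Cbar M A v f. Gbar M A v f \<pi>s \<le> Gbar M A v f \<pi>))
       \<and> ((\<forall>\<pi>\<in>Cbar M A v f. Gbar M A v f \<pi>s \<le> Gbar M A v f \<pi>)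
           \<longleftrightarrow> Gbar M A v f \<pi>s = real (famrank M A v))"
proof -
  interpret setting M A v f using finA fpos by unfold_locales
  show ?thesis by (rule main[OF mem])
qed

end
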